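(* Let $p\in(0,1]$ and let $\bar Q=(\bar q_{j,k})_{j,k\geq1}$ be the generator on $\mathbb N=\{1,2,\dots\}$ with $\bar q_{j,k}=\binom{j-1}{k-1}p^k(1-p)^{j-k}$ for $1\leq k\leq j-1$, $\bar q_{j,j+1}=(j+1)p$, $\bar q_{j,j}=p^j-(2+j)p$, and $\bar q_{j,k}=0$ otherwise. Let $q>0$. \begin{enumerate} \item If $-1+q+p^q<0$, then $\bar Q$ is positive recurrent and its stationary distribution has a finite $q$th moment. \item If $p^q=1-q$, $p<e^{-1}$ and $r>0$, then $\bar Q$ is positive recurrent and a random variable $X$ with its stationary distribution satisfies $\mathbb E\big(X^q(\log(X+1))^{-(r+1)}\big)<\infty$. \end{enumerate} *)

theory Defs
  imports "HOL-Analysis.Analysis"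
begin

text \<open>Positive recurrence is defined
  via the jump chain / holding-time decomposition (Norris, Markov Chains):
  the state i is positive recurrent iff the chain started at i returns to i
  with probability one and the expected return time
  m_i = E_i(inf {t >= J_1. X_t = i}) is finite.  The return probability and
  the expected return time are written as sums over the (countably many)
  first-return paths of the jump chain.\<close>

definition qrate :: "(nat \<Rightarrow> nat \<Rightarrow> real) \<Rightarrow> nat \<Rightarrow> real" where
  "qrate Q i = - Q i i"

text \<open>Jump matrix of the jump chain (Norris' convention for absorbing states).\<close>
definition jump_prob :: "(nat \<Rightarrow> nat \<Rightarrow> real) \<Rightarrow> nat \<Rightarrow> nat \<Rightarrow> real" where
  "jump_prob Q i j =
     (if qrate Q i = 0 then (if i = j then 1 else 0)
      else (if i = j then 0 else Q i j / qrate Q i))"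

text \<open>Paths x_1,...,x_n of the jump chain after leaving i, with x_n = i the
  first return to i.\<close>
definition first_return_paths :: "nat set \<Rightarrow> nat \<Rightarrow> nat list set" where
  "first_return_paths S i =
     {xs. xs \<noteq> [] \<and> set xs \<subseteq> S \<and> last xs = i \<and> i \<notin> set (butlast xs)}"

definition path_prob :: "(nat \<Rightarrow> nat \<Rightarrow> real) \<Rightarrow> nat \<Rightarrow> nat list \<Rightarrow> real" where
  "path_prob Q i xs = prod_list (map (\<lambda>(a, b). jump_prob Q a b) (zip (i # xs) xs))"

text \<open>Expected total holding time along the path before arriving back at i.\<close>
definition path_time :: "(nat \<Rightarrow> nat \<Rightarrow> real) \<Rightarrow> nat \<Rightarrow> nat list \<Rightarrow> real" where
  "path_time Q i xs = sum_list (map (\<lambda>a. 1 / qrate Q a) (i # butlast xs))"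

definition positive_recurrent_state :: "(nat \<Rightarrow> nat \<Rightarrow> real) \<Rightarrow> nat set \<Rightarrow> nat \<Rightarrow> bool" where
  "positive_recurrent_state Q S i \<longleftrightarrow>
     qrate Q i > 0 \<and>
     (path_prob Q i has_sum 1) (first_return_paths S i) \<and>
     (\<lambda>xs. path_prob Q i xs * path_time Q i xs) summable_on (first_return_paths S i)"

definition positive_recurrent :: "(nat \<Rightarrow> nat \<Rightarrow> real) \<Rightarrow> nat set \<Rightarrow> bool" where
  "positive_recurrent Q S \<longleftrightarrow> (\<forall>i\<in>S. positive_recurrent_state Q S i)"

definition stationary_distribution :: "(nat \<Rightarrow> nat \<Rightarrow> real) \<Rightarrow> nat set \<Rightarrow> (nat \<Rightarrow> real) \<Rightarrow> bool" where
  "stationary_distribution Q S \<pi> \<longleftrightarrow>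
     (\<forall>j\<in>S. \<pi> j \<ge> 0) \<and> (\<pi> has_sum 1) S \<and>
     (\<forall>k\<in>S. ((\<lambda>j. \<pi> j * Q j k) has_sum 0) S)"

definition Qbar :: "real \<Rightarrow> nat \<Rightarrow> nat \<Rightarrow> real" where
  "Qbar p j k =
     (if j = 0 \<or> k = 0 then 0
      else if k \<le> j - 1 then real ((j - 1) choose (k - 1)) * p ^ k * (1 - p) ^ (j - k)
      else if k = j + 1 then real (j + 1) * p
      else if k = j then p ^ j - (2 + real j) * p
      else 0)"

end

theory Submission
  imports Defs "HOL-Real_Asymp.Real_Asymp"
begin

lemma has_sum_finite_sum_fun:
  fixes f :: "'i \<Rightarrow> 'a \<Rightarrow> real"
  assumes "finite I" "\<And>j. j \<in> I \<Longrightarrow> (f j has_sum s j) A"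
  shows "((\<lambda>x. \<Sum>j\<in>I. f j x) has_sum (\<Sum>j\<in>I. s j)) A"
  using assms
proof (induction I rule: finite_induct)
  case empty
  then show ?case by simp
next
  case (insert a I)
  then show ?case by (simp add: has_sum_add)
qed

lemma has_sum_nat_partition:
  fixes \<phi> :: "'a \<Rightarrow> real" and T :: "nat \<Rightarrow> 'a set"
  assumes disj: "\<And>n m. n \<noteq> m \<Longrightarrow> T n \<inter> T m = {}"
    and nonneg: "\<And>x. x \<in> (\<Union>n. T n) \<Longrightarrow> 0 \<le> \<phi> x"
    and pieces: "\<And>n. (\<phi> has_sum s n) (T n)"
    and sm: "summable s"
  shows "(\<phi> has_sum suminf s) (\<Union>n. T n)"
proof -
  have snn: "0 \<le> s n" for n
    by (rule has_sum_nonneg[OF pieces]) (use nonneg in auto)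
  have s_has: "(s has_sum suminf s) UNIV"
    by (rule sums_nonneg_imp_has_sum[OF summable_sums[OF sm] snn])
  have sumU: "\<phi> summable_on (\<Union>n\<in>UNIV. T n)"
    by (rule summable_on_UnionI[where g=s])
       (use pieces s_has nonneg disj in \<open>auto simp: disjoint_family_on_def has_sum_imp_summable\<close>)
  then obtain tot where tot: "(\<phi> has_sum tot) (\<Union>n. T n)"
    by (auto simp: summable_on_def)
  have inj: "inj_on snd (SIGMA n:UNIV. T n)"
    using disj by (auto simp: inj_on_def)
  have img: "snd ` (SIGMA n:UNIV. T n) = (\<Union>n. T n)"
    by force
  have "((\<phi> \<circ> snd) has_sum tot) (SIGMA n:UNIV. T n)"
    using has_sum_reindex[OF inj, of \<phi> tot] tot img by simp
  then have "((\<lambda>(n,x). \<phi> x) has_sum tot) (SIGMA n:UNIV. T n)"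
    by (simp add: comp_def case_prod_unfold)
  from has_sum_Sigma'[OF this] pieces have "(s has_sum tot) UNIV"
    by simp
  with s_has have "tot = suminf s" using has_sum_unique by blast
  with tot show ?thesis by simp
qed


locale qchain =
  fixes Q :: "nat \<Rightarrow> nat \<Rightarrow> real"
  assumes qpos: "\<And>j. 1 \<le> j \<Longrightarrow> qrate Q j > 0"
    and offdiag: "\<And>j k. 1 \<le> j \<Longrightarrow> k \<noteq> j \<Longrightarrow> 0 \<le> Q j k"
    and supp: "\<And>j k. 1 \<le> j \<Longrightarrow> k = 0 \<or> j + 1 < k \<Longrightarrow> Q j k = 0"
    and rowsum: "\<And>j. 1 \<le> j \<Longrightarrow> (\<Sum>k\<in>{1..j+1}. Q j k) = 0"
begin

abbreviation P where "P \<equiv> jump_prob Q"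

lemma P_eq: "1 \<le> j \<Longrightarrow> P j k = (if k = j then 0 else Q j k / qrate Q j)"
  using qpos[of j] by (simp add: jump_prob_def)

lemma P_nonneg: "1 \<le> j \<Longrightarrow> 0 \<le> P j k"
  using qpos[of j] offdiag[of j k] by (simp add: P_eq)

lemma P_supp: assumes "1 \<le> j" "P j k \<noteq> 0" shows "1 \<le> k \<and> k \<le> j + 1"
proof -
  have "Q j k \<noteq> 0" using assms by (auto simp: P_eq split: if_splits)
  then have "\<not> (k = 0 \<or> j + 1 < k)" using supp[OF assms(1)] by blast
  then show ?thesis by auto
qed

lemma P_diag: "1 \<le> j \<Longrightarrow> P j j = 0"
  by (simp add: P_eq)

lemma P_sum: assumes "1 \<le> j" shows "(\<Sum>k\<in>{1..j+1}. P j k) = 1"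
proof -
  have jin: "j \<in> {1..j+1}" using assms by auto
  have eq: "P j k = Q j k / qrate Q j - (if k = j then Q j j / qrate Q j else 0)" for k
    using assms by (simp add: P_eq)
  have "(\<Sum>k\<in>{1..j+1}. P j k) = (\<Sum>k\<in>{1..j+1}. Q j k / qrate Q j) - Q j j / qrate Q j"
    unfolding eq sum_subtractf using jin by simp
  also have "\<dots> = ((\<Sum>k\<in>{1..j+1}. Q j k) - Q j j) / qrate Q j"
    by (simp add: sum_divide_distrib[symmetric] diff_divide_distrib)
  also have "(\<Sum>k\<in>{1..j+1}. Q j k) - Q j j = qrate Q j" using rowsum[OF assms] by (simp add: qrate_def)
  finally show ?thesis using qpos[OF assms] by simp
qed

lemma P_sum_super:
  assumes "1 \<le> j" "finite A" "{1..j+1} \<subseteq> A"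
  shows "(\<Sum>k\<in>A. P j k * X k) = (\<Sum>k\<in>{1..j+1}. P j k * X k)"
proof (rule sum.mono_neutral_right)
  show "\<forall>x\<in>A - {1..j + 1}. P j x * X x = 0"
  proof
    fix x assume "x \<in> A - {1..j + 1}"
    then have "P j x = 0" using P_supp[OF assms(1), of x] by force
    then show "P j x * X x = 0" by simp
  qed
qed (use assms in auto)

lemma P_sum_super1:
  assumes "1 \<le> j" "finite A" "{1..j+1} \<subseteq> A"
  shows "(\<Sum>k\<in>A. P j k) = 1"
  using P_sum_super[OF assms, of "\<lambda>_. 1"] P_sum[OF assms(1)] by simp

definition Pf :: "nat \<Rightarrow> (nat \<Rightarrow> real) \<Rightarrow> real" where
  "Pf j X = (\<Sum>k\<in>{1..j+1}. P j k * X k)"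

lemma path_prob_Cons: "path_prob Q j (x # xs) = P j x * path_prob Q x xs"
  by (simp add: path_prob_def)

lemma path_prob_Nil: "path_prob Q j [] = 1"
  by (simp add: path_prob_def)

lemma path_prob_snoc: "path_prob Q j (xs @ [x]) = path_prob Q j xs * P (last (j # xs)) x"
  by (induction xs arbitrary: j) (simp_all add: path_prob_Cons path_prob_Nil)

lemma path_prob_nonneg: "1 \<le> j \<Longrightarrow> set xs \<subseteq> {1..} \<Longrightarrow> 0 \<le> path_prob Q j xs"
  by (induction xs arbitrary: j) (auto simp: path_prob_Cons path_prob_Nil P_nonneg)

lemma path_prob_last:
  "1 \<le> j \<Longrightarrow> set xs \<subseteq> {1..} \<Longrightarrow> path_prob Q j xs \<noteq> 0 \<Longrightarrow> last (j # xs) \<le> j + length xs"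
proof (induction xs arbitrary: j)
  case Nil
  then show ?case by simp
next
  case (Cons x xs)
  then have "P j x \<noteq> 0" "path_prob Q x xs \<noteq> 0" by (auto simp: path_prob_Cons)
  with Cons.prems P_supp[of j x] have "x \<le> j + 1" by auto
  moreover have "last (x # xs) \<le> x + length xs"
    using Cons.IH[of x] Cons.prems \<open>path_prob Q x xs \<noteq> 0\<close> by auto
  ultimately show ?case by simp
qed

end

context qchain
begin

primrec ta :: "nat \<Rightarrow> nat \<Rightarrow> nat \<Rightarrow> real" where
  "ta i 0 k = (if k = i then 1 else 0)"
| "ta i (Suc n) k = (if k = i then 0 else (\<Sum>j\<in>{1..i+n}. ta i n j * P j k))"

primrec te :: "(nat \<Rightarrow> real) \<Rightarrow> nat \<Rightarrow> nat \<Rightarrow> nat \<Rightarrow> real" where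
  "te c i 0 k = (if k = i then c i else 0)"
| "te c i (Suc n) k = (if k = i then 0 else (\<Sum>j\<in>{1..i+n}. te c i n j * P j k) + ta i (Suc n) k * c k)"

definition rt :: "nat \<Rightarrow> nat \<Rightarrow> real" where
  "rt i n = (\<Sum>j\<in>{1..i+n}. ta i n j * P j i)"

definition Rt :: "(nat \<Rightarrow> real) \<Rightarrow> nat \<Rightarrow> nat \<Rightarrow> real" where
  "Rt c i n = (\<Sum>j\<in>{1..i+n}. te c i n j * P j i)"

definition occ :: "(nat \<Rightarrow> real) \<Rightarrow> nat \<Rightarrow> nat \<Rightarrow> real" where
  "occ c i n = (\<Sum>k\<in>{1..i+n}. ta i n k * c k)"

definition lyap :: "(nat \<Rightarrow> real) \<Rightarrow> (nat \<Rightarrow> real) \<Rightarrow> nat \<Rightarrow> bool" where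
  "lyap c W i \<longleftrightarrow> (\<forall>k\<ge>1. 0 \<le> W k) \<and> W i = 0 \<and> (\<forall>j\<ge>1. j \<noteq> i \<longrightarrow> c j + Pf j W \<le> W j)"

lemma ta_supp: "1 \<le> i \<Longrightarrow> ta i n k \<noteq> 0 \<Longrightarrow> 1 \<le> k \<and> k \<le> i + n"
proof (induction n arbitrary: k)
  case 0
  then show ?case by (auto split: if_splits)
next
  case (Suc n)
  then have "(\<Sum>j\<in>{1..i+n}. ta i n j * P j k) \<noteq> 0" by (auto split: if_splits)
  then obtain j where j: "j \<in> {1..i+n}" "P j k \<noteq> 0"
      by (rule sum.not_neutral_contains_not_neutral) auto
  then show ?case using P_supp[of j k] by auto
qed

lemma ta_nonneg: "1 \<le> i \<Longrightarrow> 0 \<le> ta i n k"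
  by (induction n arbitrary: k) (auto intro!: sum_nonneg mult_nonneg_nonneg P_nonneg)

lemma ta_Suc_i [simp]: "ta i (Suc n) i = 0"
  by simp

lemma te_supp: "1 \<le> i \<Longrightarrow> te c i n k \<noteq> 0 \<Longrightarrow> 1 \<le> k \<and> k \<le> i + n"
proof (induction n arbitrary: k)
  case 0
  then show ?case by (auto split: if_splits)
next
  case (Suc n)
  then have "(\<Sum>j\<in>{1..i+n}. te c i n j * P j k) \<noteq> 0 \<or> ta i (Suc n) k \<noteq> 0" by (auto split: if_splits)
  then show ?case
  proof
    assume "(\<Sum>j\<in>{1..i+n}. te c i n j * P j k) \<noteq> 0"
    then obtain j where j: "j \<in> {1..i+n}" "P j k \<noteq> 0"
      by (rule sum.not_neutral_contains_not_neutral) auto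
    then show ?case using P_supp[of j k] by auto
  next
    assume "ta i (Suc n) k \<noteq> 0"
    then show ?case using ta_supp[OF Suc.prems(1)] by blast
  qed
qed

lemma te_nonneg:
  assumes "1 \<le> i" "\<And>k. 1 \<le> k \<Longrightarrow> 0 \<le> c k" "1 \<le> k"
  shows "0 \<le> te c i n k"
  using assms(3)
proof (induction n arbitrary: k)
  case 0
  then show ?case using assms by auto
next
  case (Suc n)
  have "0 \<le> te c i n j * P j k" if "j \<in> {1..i+n}" for j
    using Suc.IH[of j] P_nonneg[of j k] that by auto
  then have "0 \<le> (\<Sum>j\<in>{1..i+n}. te c i n j * P j k)" by (rule sum_nonneg)
  moreover have "0 \<le> ta i (Suc n) k * c k"
    by (rule mult_nonneg_nonneg[OF ta_nonneg[OF assms(1)] assms(2)[OF Suc.prems]])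
  ultimately show ?case by (auto simp del: ta.simps)
qed

lemma sum_if_i:
  fixes S X :: "nat \<Rightarrow> real"
  assumes "i \<in> A" "finite A"
  shows "(\<Sum>k\<in>A. (if k = i then 0 else S k) * X k) = (\<Sum>k\<in>A. S k * X k) - S i * X i"
proof -
  have "(if k = i then 0 else S k) * X k = S k * X k - (if k = i then S i * X i else 0)" for k
    by auto
  then show ?thesis using assms by (simp add: sum_subtractf)
qed

lemma swap_step:
  fixes F X :: "nat \<Rightarrow> real"
  assumes "1 \<le> i"
  assumes supp: "\<And>j. F j \<noteq> 0 \<Longrightarrow> 1 \<le> j \<and> j \<le> i + n"
  shows "(\<Sum>k\<in>{1..i+Suc n}. (\<Sum>j\<in>{1..i+n}. F j * P j k) * X k) = (\<Sum>j\<in>{1..i+n}. F j * Pf j X)"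
proof -
  have "(\<Sum>k\<in>{1..i+Suc n}. (\<Sum>j\<in>{1..i+n}. F j * P j k) * X k)
      = (\<Sum>j\<in>{1..i+n}. F j * (\<Sum>k\<in>{1..i+Suc n}. P j k * X k))"
  proof -
    have "(\<Sum>k\<in>{1..i+Suc n}. (\<Sum>j\<in>{1..i+n}. F j * P j k) * X k)
        = (\<Sum>k\<in>{1..i+Suc n}. \<Sum>j\<in>{1..i+n}. F j * (P j k * X k))"
      by (simp only: sum_distrib_right mult.assoc)
    also have "\<dots> = (\<Sum>j\<in>{1..i+n}. \<Sum>k\<in>{1..i+Suc n}. F j * (P j k * X k))"
      by (rule sum.swap)
    also have "\<dots> = (\<Sum>j\<in>{1..i+n}. F j * (\<Sum>k\<in>{1..i+Suc n}. P j k * X k))"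
      by (simp only: sum_distrib_left)
    finally show ?thesis .
  qed
  also have "\<dots> = (\<Sum>j\<in>{1..i+n}. F j * Pf j X)"
    unfolding Pf_def by (intro sum.cong refl, subst P_sum_super) auto
  finally show ?thesis .
qed

lemma ta_step_sum:
  assumes "1 \<le> i"
  shows "(\<Sum>k\<in>{1..i+Suc n}. ta i (Suc n) k * X k) = (\<Sum>j\<in>{1..i+n}. ta i n j * (Pf j X - P j i * X i))"
proof -
  have "(\<Sum>k\<in>{1..i+Suc n}. ta i (Suc n) k * X k)
     = (\<Sum>k\<in>{1..i+Suc n}. (\<Sum>j\<in>{1..i+n}. ta i n j * P j k) * X k) - (\<Sum>j\<in>{1..i+n}. ta i n j * P j i) * X i"
    unfolding ta.simps by (rule sum_if_i) (use assms in auto)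
  also have "\<dots> = (\<Sum>j\<in>{1..i+n}. ta i n j * Pf j X) - (\<Sum>j\<in>{1..i+n}. ta i n j * P j i) * X i"
    by (subst swap_step) (use assms ta_supp in auto)
  also have "\<dots> = (\<Sum>j\<in>{1..i+n}. ta i n j * (Pf j X - P j i * X i))"
    by (simp add: sum_distrib_right right_diff_distrib sum_subtractf mult.assoc)
  finally show ?thesis .
qed

lemma te_step_sum:
  assumes "1 \<le> i"
  shows "(\<Sum>k\<in>{1..i+Suc n}. te c i (Suc n) k * X k)
       = (\<Sum>j\<in>{1..i+n}. te c i n j * (Pf j X - P j i * X i)) + (\<Sum>k\<in>{1..i+Suc n}. ta i (Suc n) k * c k * X k)"
proof -
  have eq: "te c i (Suc n) k * X k = (if k = i then 0 else (\<Sum>j\<in>{1..i+n}. te c i n j * P j k)) * X k + ta i (Suc n) k * c k * X k" for k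
    by (simp add: distrib_right)
  have "(\<Sum>k\<in>{1..i+Suc n}. te c i (Suc n) k * X k)
     = (\<Sum>k\<in>{1..i+Suc n}. (if k = i then 0 else (\<Sum>j\<in>{1..i+n}. te c i n j * P j k)) * X k) + (\<Sum>k\<in>{1..i+Suc n}. ta i (Suc n) k * c k * X k)"
    unfolding eq sum.distrib ..
  also have "(\<Sum>k\<in>{1..i+Suc n}. (if k = i then 0 else (\<Sum>j\<in>{1..i+n}. te c i n j * P j k)) * X k)
     = (\<Sum>k\<in>{1..i+Suc n}. (\<Sum>j\<in>{1..i+n}. te c i n j * P j k) * X k) - (\<Sum>j\<in>{1..i+n}. te c i n j * P j i) * X i"
    by (rule sum_if_i) (use assms in auto)
  also have "\<dots> = (\<Sum>j\<in>{1..i+n}. te c i n j * Pf j X) - (\<Sum>j\<in>{1..i+n}. te c i n j * P j i) * X i"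
    by (subst swap_step) (use assms te_supp in auto)
  also have "\<dots> = (\<Sum>j\<in>{1..i+n}. te c i n j * (Pf j X - P j i * X i))"
    by (simp add: sum_distrib_right right_diff_distrib sum_subtractf mult.assoc)
  finally show ?thesis .
qed

lemma Pf_one: "1 \<le> j \<Longrightarrow> Pf j (\<lambda>_. 1) = 1"
  using P_sum by (simp add: Pf_def)

lemma conservation:
  assumes "1 \<le> i"
  shows "(\<Sum>k\<in>{1..i+n}. ta i n k) + (\<Sum>m<n. rt i m) = 1"
proof (induction n)
  case 0
  have "(\<Sum>k\<in>{1..i}. ta i 0 k) = 1" using assms by (simp add: sum.delta)
  then show ?case by simp
next
  case (Suc n)
  have "(\<Sum>k\<in>{1..i+Suc n}. ta i (Suc n) k) = (\<Sum>j\<in>{1..i+n}. ta i n j * (Pf j (\<lambda>_. 1) - P j i * 1))"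
    using ta_step_sum[OF assms, of n "\<lambda>_. 1"] by (simp only: mult_1_right)
  also have "\<dots> = (\<Sum>j\<in>{1..i+n}. ta i n j - ta i n j * P j i)"
    by (rule sum.cong) (auto simp: Pf_one algebra_simps)
  also have "\<dots> = (\<Sum>j\<in>{1..i+n}. ta i n j) - rt i n"
    by (simp only: sum_subtractf rt_def)
  finally have "(\<Sum>k\<in>{1..i+Suc n}. ta i (Suc n) k) = (\<Sum>j\<in>{1..i+n}. ta i n j) - rt i n" .
  then show ?case using Suc.IH by (simp only: sum.lessThan_Suc)
qed

end

context qchain
begin

lemma Pf_nonneg: "1 \<le> j \<Longrightarrow> (\<And>k. 1 \<le> k \<Longrightarrow> 0 \<le> W k) \<Longrightarrow> 0 \<le> Pf j W"
  unfolding Pf_def by (rule sum_nonneg) (auto intro!: mult_nonneg_nonneg P_nonneg)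

lemma ta0_sum: "finite A \<Longrightarrow> i \<in> A \<Longrightarrow> (\<Sum>k\<in>A. ta i 0 k * X k) = X i"
proof -
  assume A: "finite A" "i \<in> A"
  have "(\<Sum>k\<in>A. ta i 0 k * X k) = (\<Sum>k\<in>A. if k = i then X k else 0)"
    by (rule sum.cong) auto
  also have "\<dots> = X i" using A by (simp add: sum.delta)
  finally show ?thesis .
qed

lemma lyap_ge_c: "lyap c W i \<Longrightarrow> 1 \<le> k \<Longrightarrow> k \<noteq> i \<Longrightarrow> c k \<le> W k"
  unfolding lyap_def using Pf_nonneg[of k W] by fastforce

lemma ta_W_step:
  assumes "1 \<le> i" "W i = 0"
  shows "(\<Sum>k\<in>{1..i+Suc n}. ta i (Suc n) k * W k) = (\<Sum>j\<in>{1..i+n}. ta i n j * Pf j W)"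
  using ta_step_sum[OF assms(1), of n W] assms(2) by simp

lemma occ_Suc:
  assumes "1 \<le> i"
  shows "occ c i 0 = c i"
  using ta0_sum[of "{1..i}" i c] assms by (simp add: occ_def)

definition inc :: "(nat \<Rightarrow> real) \<Rightarrow> (nat \<Rightarrow> real) \<Rightarrow> nat \<Rightarrow> nat \<Rightarrow> real" where
  "inc c W i n = (\<Sum>j\<in>{1..i+n}. ta i n j * (c j + Pf j W - W j))"

lemma inc_0: assumes "1 \<le> i" "W i = 0" shows "inc c W i 0 = c i + Pf i W"
  using ta0_sum[of "{1..i}" i "\<lambda>j. c j + Pf j W - W j"] assms by (simp add: inc_def)

lemma inc_Suc: assumes "1 \<le> i" "lyap c W i" shows "inc c W i (Suc n) \<le> 0"
  unfolding inc_def
proof (rule sum_nonpos)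
  fix j assume j: "j \<in> {1..i + Suc n}"
  show "ta i (Suc n) j * (c j + Pf j W - W j) \<le> 0"
  proof (cases "j = i")
    case False
    then have "c j + Pf j W - W j \<le> 0" using assms(2) j unfolding lyap_def by auto
    then show ?thesis by (rule mult_nonneg_nonpos[OF ta_nonneg[OF assms(1)]])
  qed simp
qed

lemma occ_rec:
  assumes "1 \<le> i" "W i = 0"
  shows "(\<Sum>m<Suc n. occ c i m) + (\<Sum>k\<in>{1..i+Suc n}. ta i (Suc n) k * W k)
       = ((\<Sum>m<n. occ c i m) + (\<Sum>k\<in>{1..i+n}. ta i n k * W k)) + inc c W i n"
  using ta_W_step[of i W n, OF assms]
  by (simp add: inc_def occ_def sum.distrib[symmetric] algebra_simps)

lemma bound_by_inc:
  fixes M :: "nat \<Rightarrow> real"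
  assumes "M 0 = 0" "\<And>n. M (Suc n) = M n + inc c W i n" "1 \<le> i" "lyap c W i" "0 \<le> c i"
  shows "M n \<le> c i + Pf i W"
proof (induction n)
  case 0
  have "W i = 0" using assms(4) by (simp add: lyap_def)
  have "0 \<le> Pf i W" by (rule Pf_nonneg) (use assms(3,4) in \<open>auto simp: lyap_def\<close>)
  then show ?case using assms(1,5) by simp
next
  case (Suc n)
  have Wi: "W i = 0" using assms(4) by (simp add: lyap_def)
  show ?case
  proof (cases n)
    case 0
    then show ?thesis using assms(1,2) inc_0[of i W c, OF assms(3) Wi] by simp
  next
    case (Suc n')
    then show ?thesis using assms(2)[of n] inc_Suc[OF assms(3,4), of n'] Suc.IH by simp
  qed
qed


lemma occ_bound:
  assumes "1 \<le> i" "lyap c W i" "0 \<le> c i"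
  shows "(\<Sum>m<n. occ c i m) + (\<Sum>k\<in>{1..i+n}. ta i n k * W k) \<le> c i + Pf i W"
proof -
  have Wi: "W i = 0" using assms(2) by (simp add: lyap_def)
  show ?thesis
    by (rule bound_by_inc[where M="\<lambda>n. (\<Sum>m<n. occ c i m) + (\<Sum>k\<in>{1..i+n}. ta i n k * W k)"])
       (use assms Wi occ_rec[of i W c, OF assms(1) Wi] ta0_sum[of "{1..i}" i W] in auto)
qed

lemma te_sum_Suc:
  assumes "1 \<le> i"
  shows "(\<Sum>k\<in>{1..i+Suc n}. te c i (Suc n) k) = (\<Sum>j\<in>{1..i+n}. te c i n j) - Rt c i n + occ c i (Suc n)"
proof -
  have "(\<Sum>k\<in>{1..i+Suc n}. te c i (Suc n) k * 1)
       = (\<Sum>j\<in>{1..i+n}. te c i n j * (Pf j (\<lambda>_. 1) - P j i * 1)) + (\<Sum>k\<in>{1..i+Suc n}. ta i (Suc n) k * c k * 1)"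
    by (rule te_step_sum[OF assms])
  also have "(\<Sum>j\<in>{1..i+n}. te c i n j * (Pf j (\<lambda>_. 1) - P j i * 1)) = (\<Sum>j\<in>{1..i+n}. te c i n j - te c i n j * P j i)"
    by (rule sum.cong) (auto simp: Pf_one algebra_simps)
  finally show ?thesis by (simp add: sum_subtractf Rt_def occ_def del: ta.simps te.simps)
qed

lemma ta_Wc_Suc:
  assumes "1 \<le> i" "W i = 0"
  shows "(\<Sum>k\<in>{1..i+Suc n}. ta i (Suc n) k * (W k - c k)) = (\<Sum>j\<in>{1..i+n}. ta i n j * Pf j W) - occ c i (Suc n)"
  using ta_W_step[of i W n, OF assms] by (simp add: occ_def right_diff_distrib sum_subtractf del: ta.simps)

lemma time_bound:
  assumes "1 \<le> i" "lyap c W i" "\<And>k. 1 \<le> k \<Longrightarrow> 0 \<le> c k"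
  shows "(\<Sum>m<n. Rt c i m) \<le> c i + Pf i W"
proof -
  have Wi: "W i = 0" using assms(2) by (simp add: lyap_def)
  define M where "M n = (\<Sum>m<n. Rt c i m) + (\<Sum>k\<in>{1..i+n}. te c i n k) + (\<Sum>k\<in>{1..i+n}. ta i n k * (W k - c k))" for n
  have M0: "M 0 = 0" using assms(1) ta0_sum[of "{1..i}" i "\<lambda>k. W k - c k"] Wi by (simp add: M_def sum.delta)
  have MS: "M (Suc n) = M n + inc c W i n" for n
    unfolding M_def te_sum_Suc[OF assms(1)] ta_Wc_Suc[of i W, OF assms(1) Wi] inc_def
    by (simp add: algebra_simps sum_subtractf sum.distrib del: ta.simps te.simps)
  have B: "M n \<le> c i + Pf i W"
    by (rule bound_by_inc[OF M0 MS assms(1,2)]) (use assms(1,3) in auto)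
  show ?thesis
  proof (cases n)
    case 0
    have "0 \<le> Pf i W" by (rule Pf_nonneg) (use assms(1,2) in \<open>auto simp: lyap_def\<close>)
    then show ?thesis using 0 assms(1) assms(3)[of i] by simp
  next
    case (Suc n')
    have "0 \<le> (\<Sum>k\<in>{1..i+n}. te c i n k)"
      by (rule sum_nonneg) (use te_nonneg[OF assms(1,3)] in auto)
    moreover have "0 \<le> (\<Sum>k\<in>{1..i+n}. ta i n k * (W k - c k))"
    proof (rule sum_nonneg)
      fix k assume k: "k \<in> {1..i+n}"
      show "0 \<le> ta i n k * (W k - c k)"
      proof (cases "k = i")
        case True
        then show ?thesis using Suc by simp
      next
        case False
        then show ?thesis using lyap_ge_c[OF assms(2), of k] k ta_nonneg[OF assms(1)] by simp
      qed
    qed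
    ultimately show ?thesis using B unfolding M_def by linarith
  qed
qed

end

lemma not_summable_shift_harm:
  assumes "\<Lambda> > 0"
  shows "\<not> summable (\<lambda>m::nat. 1 / (\<Lambda> * real (i + m + 1)))"
proof
  assume "summable (\<lambda>m::nat. 1 / (\<Lambda> * real (i + m + 1)))"
  then have "summable (\<lambda>m::nat. \<Lambda> * (1 / (\<Lambda> * real (i + m + 1))))"
    by (rule summable_mult)
  moreover have "(\<lambda>m::nat. \<Lambda> * (1 / (\<Lambda> * real (i + m + 1)))) = (\<lambda>m. inverse (real (m + Suc i)))"
  proof
    fix m :: nat
    have L0: "\<Lambda> \<noteq> 0" using assms by simp
    have "\<Lambda> * (1 / (\<Lambda> * real (i + m + 1))) = 1 / real (i + m + 1)"
      using L0 by simp
    also have "\<dots> = inverse (real (m + Suc i))" by (simp add: inverse_eq_divide add_ac)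
    finally show "\<Lambda> * (1 / (\<Lambda> * real (i + m + 1))) = inverse (real (m + Suc i))" .
  qed
  ultimately have "summable (\<lambda>m. inverse (real (m + Suc i)))" by simp
  then have "summable (\<lambda>m. inverse (real m) :: real)"
    using summable_iff_shift[of "\<lambda>m. inverse (real m) :: real" "Suc i"] by simp
  then show False using not_summable_harmonic by blast
qed

lemma unbounded_partial:
  fixes f :: "nat \<Rightarrow> real"
  assumes "\<not> summable f" "\<And>n. 0 \<le> f n"
  shows "\<exists>n. M < (\<Sum>m<n. f m)"
proof (rule ccontr)
  assume "\<not> (\<exists>n. M < (\<Sum>m<n. f m))"
  then have "\<And>n. (\<Sum>m<n. f m) \<le> M" by (simp add: not_less)
  then have "summable f" by (rule summableI_nonneg_bounded[OF assms(2)])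
  with assms(1) show False by blast
qed

context qchain
begin

lemma rt_nonneg: "1 \<le> i \<Longrightarrow> 0 \<le> rt i n"
  unfolding rt_def by (rule sum_nonneg) (auto intro!: mult_nonneg_nonneg ta_nonneg P_nonneg)

lemma Rt_nonneg: "1 \<le> i \<Longrightarrow> (\<And>k. 1 \<le> k \<Longrightarrow> 0 \<le> c k) \<Longrightarrow> 0 \<le> Rt c i n"
  unfolding Rt_def by (rule sum_nonneg) (auto intro!: mult_nonneg_nonneg te_nonneg P_nonneg)

lemma return_sums:
  assumes i: "1 \<le> i" and L: "lyap c W i" and cnn: "\<And>k. 1 \<le> k \<Longrightarrow> 0 \<le> c k"
    and \<Lambda>: "\<Lambda> > 0" and clow: "\<And>k. 1 \<le> k \<Longrightarrow> 1 / (\<Lambda> * real (k+1)) \<le> c k"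
  shows "rt i sums 1"
proof -
  define Z where "Z n = (\<Sum>k\<in>{1..i+n}. ta i n k)" for n
  define B where "B = c i + Pf i W"
  have Zc: "Z n = 1 - (\<Sum>m<n. rt i m)" for n
    using conservation[OF i, of n] by (simp add: Z_def)
  have Znn: "0 \<le> Z n" for n
    unfolding Z_def by (rule sum_nonneg) (use ta_nonneg[OF i] in auto)
  have Zanti: "Z n \<le> Z m" if "m \<le> n" for m n
  proof -
    have "(\<Sum>m<m. rt i m) \<le> (\<Sum>m<n. rt i m)"
      by (rule sum_mono2) (use that rt_nonneg[OF i] in auto)
    then show ?thesis by (simp add: Zc)
  qed
  have occ_low: "Z m / (\<Lambda> * real (i + m + 1)) \<le> occ c i m" for m
  proof -
    have "Z m / (\<Lambda> * real (i + m + 1)) = (\<Sum>k\<in>{1..i+m}. ta i m k * (1 / (\<Lambda> * real (i + m + 1))))"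
      by (simp add: Z_def sum_divide_distrib)
    also have "\<dots> \<le> (\<Sum>k\<in>{1..i+m}. ta i m k * c k)"
    proof (rule sum_mono)
      fix k assume k: "k \<in> {1..i+m}"
      have "1 / (\<Lambda> * real (i + m + 1)) \<le> 1 / (\<Lambda> * real (k + 1))"
        using k \<Lambda> by (intro divide_left_mono mult_left_mono) auto
      also have "\<dots> \<le> c k" using clow k by auto
      finally show "ta i m k * (1 / (\<Lambda> * real (i + m + 1))) \<le> ta i m k * c k"
        by (rule mult_left_mono) (rule ta_nonneg[OF i])
    qed
    finally show ?thesis by (simp add: occ_def)
  qed
  have occB: "(\<Sum>m<n. occ c i m) \<le> B" for n
  proof -
    have "0 \<le> (\<Sum>k\<in>{1..i+n}. ta i n k * W k)"
      by (rule sum_nonneg) (use ta_nonneg[OF i] L in \<open>auto simp: lyap_def\<close>)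
    then show ?thesis using occ_bound[OF i L cnn[OF i], of n] by (simp add: B_def)
  qed
  have ZH: "Z n * (\<Sum>m<n. 1 / (\<Lambda> * real (i + m + 1))) \<le> B" for n
  proof -
    have "Z n * (\<Sum>m<n. 1 / (\<Lambda> * real (i + m + 1))) = (\<Sum>m<n. Z n / (\<Lambda> * real (i + m + 1)))"
      by (simp add: sum_distrib_left)
    also have "\<dots> \<le> (\<Sum>m<n. Z m / (\<Lambda> * real (i + m + 1)))"
      by (rule sum_mono) (use Zanti \<Lambda> in \<open>auto intro!: divide_right_mono\<close>)
    also have "\<dots> \<le> (\<Sum>m<n. occ c i m)"
      by (rule sum_mono) (rule occ_low)
    finally show ?thesis using occB[of n] by simp
  qed
  have Bnn: "0 \<le> B" using occB[of 0] by simp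
  have hnn: "0 \<le> 1 / (\<Lambda> * real (i + m + 1))" for m using \<Lambda> by simp
  have Z0: "Z \<longlonglongrightarrow> 0"
  proof (rule LIMSEQ_I)
    fix r :: real assume r: "0 < r"
    obtain n0 where n0: "B / r < (\<Sum>m<n0. 1 / (\<Lambda> * real (i + m + 1)))"
      using unbounded_partial[OF not_summable_shift_harm[OF \<Lambda>] hnn] by blast
    define H where "H = (\<Sum>m<n0. 1 / (\<Lambda> * real (i + m + 1)))"
    have Hpos: "0 < H" using n0 Bnn r unfolding H_def by (smt (verit) divide_nonneg_pos)
    have "Z n0 < r"
    proof -
      have "Z n0 * H \<le> B" using ZH[of n0] by (simp add: H_def)
      moreover have "B < r * H" using n0 r by (simp add: H_def pos_divide_less_eq mult.commute)
      ultimately have "Z n0 * H < r * H" by linarith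
      then show ?thesis using Hpos by simp
    qed
    then show "\<exists>no. \<forall>n\<ge>no. norm (Z n - 0) < r"
      using Zanti Znn by (intro exI[of _ n0]) (auto intro: le_less_trans)
  qed
  have "(\<lambda>n. \<Sum>m<n. rt i m) \<longlonglongrightarrow> 1 - 0"
  proof -
    have "(\<lambda>n. \<Sum>m<n. rt i m) = (\<lambda>n. 1 - Z n)" by (simp add: Zc)
    then show ?thesis using tendsto_diff[OF tendsto_const Z0] by simp
  qed
  then show ?thesis by (simp add: sums_def)
qed

end

definition TL :: "nat \<Rightarrow> nat \<Rightarrow> nat list set" where
  "TL i n = {ys. length ys = n \<and> set ys \<subseteq> {1..} - {i}}"

definition sumc :: "(nat \<Rightarrow> real) \<Rightarrow> nat list \<Rightarrow> real" where
  "sumc c xs = sum_list (map c xs)"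

lemma TL_0: "TL i 0 = {[]}" by (auto simp: TL_def)

lemma last_in_TL: "1 \<le> i \<Longrightarrow> ys \<in> TL i n \<Longrightarrow> 1 \<le> last (i # ys)"
  by (cases ys rule: rev_cases) (auto simp: TL_def)

lemma snoc_reindex:
  fixes \<phi> :: "nat list \<Rightarrow> real"
  assumes "k \<noteq> i" "1 \<le> k"
  shows "((\<lambda>ys'. if last (i # ys') = k then \<phi> ys' else 0) has_sum s) (TL i (Suc n))
     \<longleftrightarrow> ((\<lambda>ys. \<phi> (ys @ [k])) has_sum s) (TL i n)"
proof -
  let ?f = "\<lambda>ys'. if last (i # ys') = k then \<phi> ys' else 0"
  have sub: "(\<lambda>ys. ys @ [k]) ` TL i n \<subseteq> TL i (Suc n)"
    using assms by (auto simp: TL_def)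
  have out: "?f x = 0" if "x \<in> TL i (Suc n) - (\<lambda>ys. ys @ [k]) ` TL i n" for x
  proof (rule ccontr)
    assume "?f x \<noteq> 0"
    then have lk: "last (i # x) = k" by (auto split: if_splits)
    from that have x: "length x = Suc n" "set x \<subseteq> {1..} - {i}" by (auto simp: TL_def)
    then obtain ys z where xs: "x = ys @ [z]" by (cases x rule: rev_cases) auto
    with lk have "z = k" by simp
    moreover have "ys \<in> TL i n" using x xs by (auto simp: TL_def)
    ultimately have "x \<in> (\<lambda>ys. ys @ [k]) ` TL i n" using xs by auto
    with that show False by blast
  qed
  have "(?f has_sum s) (TL i (Suc n)) \<longleftrightarrow> (?f has_sum s) ((\<lambda>ys. ys @ [k]) ` TL i n)"
    by (rule has_sum_cong_neutral) (use sub out in auto)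
  also have "\<dots> \<longleftrightarrow> ((?f \<circ> (\<lambda>ys. ys @ [k])) has_sum s) (TL i n)"
    by (rule has_sum_reindex) (auto simp: inj_on_def)
  also have "\<dots> \<longleftrightarrow> ((\<lambda>ys. \<phi> (ys @ [k])) has_sum s) (TL i n)"
    by (rule has_sum_cong) auto
  finally show ?thesis .
qed

context qchain
begin

lemma decomp_last:
  fixes g :: "nat list \<Rightarrow> real"
  assumes i: "1 \<le> i"
    and IH: "\<And>j. 1 \<le> j \<Longrightarrow> ((\<lambda>ys. if last (i # ys) = j then g ys else 0) has_sum G j) (TL i n)"
    and gs: "\<And>ys. ys \<in> TL i n \<Longrightarrow> g ys \<noteq> 0 \<Longrightarrow> last (i # ys) \<le> i + n"
  shows "((\<lambda>ys. g ys * P (last (i # ys)) k) has_sum (\<Sum>j\<in>{1..i+n}. G j * P j k)) (TL i n)"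
proof -
  have eq: "g ys * P (last (i # ys)) k = (\<Sum>j\<in>{1..i+n}. (if last (i # ys) = j then g ys else 0) * P j k)"
    if ys: "ys \<in> TL i n" for ys
  proof (cases "g ys = 0")
    case True
    show ?thesis by (simp only: True if_cancel mult_zero_left sum.neutral_const)
  next
    case False
    then have "last (i # ys) \<in> {1..i+n}" using gs[OF ys] last_in_TL[OF i ys] by auto
    then show ?thesis
      by (simp add: if_distrib[where f="\<lambda>x. x * _"] sum.delta' cong: if_cong)
  qed
  have H: "((\<lambda>ys. \<Sum>j\<in>{1..i+n}. (if last (i # ys) = j then g ys else 0) * P j k) has_sum (\<Sum>j\<in>{1..i+n}. G j * P j k)) (TL i n)"
  proof (rule has_sum_finite_sum_fun)
    fix j assume j: "j \<in> {1..i+n}"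
    show "((\<lambda>ys. (if last (i # ys) = j then g ys else 0) * P j k) has_sum G j * P j k) (TL i n)"
      by (rule has_sum_cmult_left[OF IH]) (use j in auto)
  qed simp
  show ?thesis
    using has_sum_cong[where A="TL i n" and f="\<lambda>ys. g ys * P (last (i # ys)) k"
        and g="\<lambda>ys. \<Sum>j\<in>{1..i+n}. (if last (i # ys) = j then g ys else 0) * P j k"] eq H by blast
qed

lemma pp_supp: "1 \<le> i \<Longrightarrow> ys \<in> TL i n \<Longrightarrow> path_prob Q i ys \<noteq> 0 \<Longrightarrow> last (i # ys) \<le> i + n"
proof -
  assume a: "1 \<le> i" "ys \<in> TL i n" "path_prob Q i ys \<noteq> 0"
  then have "set ys \<subseteq> {1..}" "length ys = n" by (auto simp: TL_def)
  then show ?thesis using path_prob_last[of i ys] a by auto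
qed

lemma list_ta:
  assumes i: "1 \<le> i"
  shows "1 \<le> k \<Longrightarrow> ((\<lambda>ys. if last (i # ys) = k then path_prob Q i ys else 0) has_sum ta i n k) (TL i n)"
proof (induction n arbitrary: k)
  case 0
  then show ?case by (simp add: TL_0 path_prob_Nil has_sum_finite_iff)
next
  case (Suc n)
  show ?case
  proof (cases "k = i")
    case True
    have "((\<lambda>ys. if last (i # ys) = k then path_prob Q i ys else 0) has_sum 0) (TL i (Suc n))"
    proof (rule has_sum_0)
      fix ys assume "ys \<in> TL i (Suc n)"
      then have ne: "ys \<noteq> []" and st: "set ys \<subseteq> {1..} - {i}" by (auto simp: TL_def)
      have "last ys \<in> set ys" using ne by simp
      with st ne have "ys \<noteq> []" "last ys \<noteq> i" by blast+
      then show "(if last (i # ys) = k then path_prob Q i ys else 0) = 0" using True by simp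
    qed
    then show ?thesis using True by simp
  next
    case False
    have "((\<lambda>ys. path_prob Q i ys * P (last (i # ys)) k) has_sum (\<Sum>j\<in>{1..i+n}. ta i n j * P j k)) (TL i n)"
      by (rule decomp_last[OF i Suc.IH pp_supp[OF i]])
    then show ?thesis
      using snoc_reindex[OF False Suc.prems] False by (simp add: path_prob_snoc)
  qed
qed

lemma sumc_snoc: "sumc c (xs @ [x]) = sumc c xs + c x"
  by (simp add: sumc_def)

lemma list_te:
  assumes i: "1 \<le> i"
  shows "1 \<le> k \<Longrightarrow> ((\<lambda>ys. if last (i # ys) = k then path_prob Q i ys * sumc c (i # ys) else 0) has_sum te c i n k) (TL i n)"
proof (induction n arbitrary: k)
  case 0
  then show ?case by (simp add: TL_0 path_prob_Nil sumc_def has_sum_finite_iff)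
next
  case (Suc n)
  show ?case
  proof (cases "k = i")
    case True
    have "((\<lambda>ys. if last (i # ys) = k then path_prob Q i ys * sumc c (i # ys) else 0) has_sum 0) (TL i (Suc n))"
    proof (rule has_sum_0)
      fix ys assume "ys \<in> TL i (Suc n)"
      then have ne: "ys \<noteq> []" and st: "set ys \<subseteq> {1..} - {i}" by (auto simp: TL_def)
      have "last ys \<in> set ys" using ne by simp
      with st ne have "ys \<noteq> []" "last ys \<noteq> i" by blast+
      then show "(if last (i # ys) = k then path_prob Q i ys * sumc c (i # ys) else 0) = 0" using True by simp
    qed
    then show ?thesis using True by simp
  next
    case False
    have h1: "((\<lambda>ys. (path_prob Q i ys * sumc c (i # ys)) * P (last (i # ys)) k) has_sum (\<Sum>j\<in>{1..i+n}. te c i n j * P j k)) (TL i n)"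
      by (rule decomp_last[OF i Suc.IH]) (use pp_supp[OF i] in auto)
    have h2: "((\<lambda>ys. path_prob Q i ys * P (last (i # ys)) k) has_sum (\<Sum>j\<in>{1..i+n}. ta i n j * P j k)) (TL i n)"
      by (rule decomp_last[OF i list_ta[OF i] pp_supp[OF i]])
    have h3: "((\<lambda>ys. (path_prob Q i ys * sumc c (i # ys)) * P (last (i # ys)) k + (path_prob Q i ys * P (last (i # ys)) k) * c k)
       has_sum ((\<Sum>j\<in>{1..i+n}. te c i n j * P j k) + (\<Sum>j\<in>{1..i+n}. ta i n j * P j k) * c k)) (TL i n)"
      by (rule has_sum_add[OF h1 has_sum_cmult_left[OF h2]])
    have "((\<lambda>ys. path_prob Q i (ys @ [k]) * sumc c (i # ys @ [k])) has_sum te c i (Suc n) k) (TL i n)"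
      using h3 False by (simp add: path_prob_snoc sumc_snoc[where xs="i # _", simplified] algebra_simps)
    then show ?thesis
      using snoc_reindex[OF False Suc.prems] by simp
  qed
qed

end

context qchain
begin

lemma FRP_eq:
  assumes "1 \<le> i"
  shows "first_return_paths {1..} i = (\<lambda>ys. ys @ [i]) ` (\<Union>n. TL i n)"
proof (intro equalityI subsetI)
  fix xs assume "xs \<in> first_return_paths {1..} i"
  then have xs: "xs \<noteq> []" "set xs \<subseteq> {1..}" "last xs = i" "i \<notin> set (butlast xs)"
    by (auto simp: first_return_paths_def)
  then have eq: "xs = butlast xs @ [i]" by (metis append_butlast_last_id)
  have "set (butlast xs) \<subseteq> set xs" by (rule in_set_butlastD[THEN subsetI])
  then have "butlast xs \<in> TL i (length (butlast xs))" using xs by (auto simp: TL_def)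
  then show "xs \<in> (\<lambda>ys. ys @ [i]) ` (\<Union>n. TL i n)" using eq by blast
next
  fix xs assume "xs \<in> (\<lambda>ys. ys @ [i]) ` (\<Union>n. TL i n)"
  then obtain ys n where "xs = ys @ [i]" "ys \<in> TL i n" by blast
  then show "xs \<in> first_return_paths {1..} i"
    using assms by (auto simp: first_return_paths_def TL_def)
qed

lemma path_time_snoc: "path_time Q i (ys @ [i]) = sumc (\<lambda>a. 1 / qrate Q a) (i # ys)"
  by (simp add: path_time_def sumc_def)

lemma TL_disj: "n \<noteq> m \<Longrightarrow> TL i n \<inter> TL i m = {}"
  by (auto simp: TL_def)

lemma pos_rec_state:
  assumes i: "1 \<le> i"
    and L: "lyap (\<lambda>k. 1 / qrate Q k) W i"
    and \<Lambda>: "\<Lambda> > 0" and qup: "\<And>k. 1 \<le> k \<Longrightarrow> qrate Q k \<le> \<Lambda> * real (k + 1)"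
  shows "positive_recurrent_state Q {1..} i"
proof -
  define c where "c = (\<lambda>k. 1 / qrate Q k)"
  have cnn: "0 \<le> c k" if "1 \<le> k" for k using qpos[OF that] by (simp add: c_def)
  have clow: "1 / (\<Lambda> * real (k+1)) \<le> c k" if "1 \<le> k" for k
    unfolding c_def using qpos[OF that] qup[OF that] \<Lambda>
    by (intro divide_left_mono) auto
  have L': "lyap c W i" using L by (simp add: c_def)
  have inj: "inj_on (\<lambda>ys. ys @ [i]) (\<Union>n. TL i n)" by (auto simp: inj_on_def)
  have setTL: "ys \<in> (\<Union>n. TL i n) \<Longrightarrow> set ys \<subseteq> {1..}" for ys by (auto simp: TL_def)
  have rs: "rt i sums 1" by (rule return_sums[OF i L' cnn \<Lambda> clow])
  have piece1: "((\<lambda>ys. path_prob Q i (ys @ [i])) has_sum rt i n) (TL i n)" for n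
  proof -
    have "((\<lambda>ys. path_prob Q i ys * P (last (i # ys)) i) has_sum (\<Sum>j\<in>{1..i+n}. ta i n j * P j i)) (TL i n)"
      by (rule decomp_last[OF i list_ta[OF i] pp_supp[OF i]])
    then show ?thesis by (simp add: path_prob_snoc rt_def)
  qed
  have h1: "((\<lambda>ys. path_prob Q i (ys @ [i])) has_sum suminf (rt i)) (\<Union>n. TL i n)"
  proof (rule has_sum_nat_partition[OF TL_disj _ piece1 sums_summable[OF rs]])
    fix ys assume ys: "ys \<in> (\<Union>n. TL i n)"
    show "0 \<le> path_prob Q i (ys @ [i])" using i setTL[OF ys] by (intro path_prob_nonneg) auto
  qed
  then have h1': "((\<lambda>ys. path_prob Q i (ys @ [i])) has_sum 1) (\<Union>n. TL i n)"
    using sums_unique[OF rs] by simp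
  have A: "(path_prob Q i has_sum 1) (first_return_paths {1..} i)"
    unfolding FRP_eq[OF i] has_sum_reindex[OF inj] using h1' by (simp add: comp_def)
  have piece2: "((\<lambda>ys. path_prob Q i (ys @ [i]) * path_time Q i (ys @ [i])) has_sum Rt c i n) (TL i n)" for n
  proof -
    have "((\<lambda>ys. (path_prob Q i ys * sumc c (i # ys)) * P (last (i # ys)) i) has_sum (\<Sum>j\<in>{1..i+n}. te c i n j * P j i)) (TL i n)"
      by (rule decomp_last[OF i list_te[OF i]]) (use pp_supp[OF i] in auto)
    then show ?thesis by (simp add: path_prob_snoc Rt_def path_time_snoc c_def algebra_simps)
  qed
  have Rsum: "summable (Rt c i)"
    by (rule summableI_nonneg_bounded[where x="c i + Pf i W"])
       (use Rt_nonneg[OF i cnn] time_bound[OF i L' cnn] in auto)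
  have h2: "((\<lambda>ys. path_prob Q i (ys @ [i]) * path_time Q i (ys @ [i])) has_sum suminf (Rt c i)) (\<Union>n. TL i n)"
  proof (rule has_sum_nat_partition[OF TL_disj _ piece2 Rsum])
    fix ys assume ys: "ys \<in> (\<Union>n. TL i n)"
    have "0 \<le> path_prob Q i (ys @ [i])" using i setTL[OF ys] by (intro path_prob_nonneg) auto
    moreover have "0 \<le> path_time Q i (ys @ [i])"
      unfolding path_time_snoc sumc_def
      using i setTL[OF ys] qpos by (intro sum_list_nonneg) (auto simp: less_imp_le)
    ultimately show "0 \<le> path_prob Q i (ys @ [i]) * path_time Q i (ys @ [i])" by simp
  qed
  have B: "(\<lambda>xs. path_prob Q i xs * path_time Q i xs) summable_on (first_return_paths {1..} i)"
    unfolding FRP_eq[OF i] summable_on_reindex[OF inj] using h2 by (auto simp: comp_def summable_on_def)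
  show ?thesis unfolding positive_recurrent_state_def using qpos[OF i] A B by simp
qed

end

lemma tonelli_nat:
  fixes F :: "nat \<Rightarrow> 'a \<Rightarrow> real"
  assumes nn: "\<And>n j. j \<in> S \<Longrightarrow> 0 \<le> F n j"
    and rows: "\<And>n. (F n has_sum G n) S"
    and cols: "\<And>j. j \<in> S \<Longrightarrow> (\<lambda>n. F n j) sums H j"
    and G: "summable G"
  shows "(H has_sum suminf G) S"
proof -
  have Gnn: "0 \<le> G n" for n by (rule has_sum_nonneg[OF rows]) (use nn in auto)
  have Gh: "(G has_sum suminf G) UNIV" by (rule sums_nonneg_imp_has_sum[OF summable_sums[OF G] Gnn])
  have "(\<lambda>(n, j). F n j) summable_on Sigma UNIV (\<lambda>_. S)"
    by (rule summable_on_SigmaI[where g=G]) (use rows Gh nn in \<open>auto simp: has_sum_imp_summable\<close>)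
  then obtain T where T: "((\<lambda>(n, j). F n j) has_sum T) (UNIV \<times> S)"
    by (auto simp: summable_on_def)
  have "(G has_sum T) UNIV"
    by (rule has_sum_Sigma'[OF T]) (use rows in simp)
  then have TG: "T = suminf G" using Gh has_sum_unique by blast
  have T': "((\<lambda>(j, n). F n j) has_sum T) (S \<times> UNIV)"
    using has_sum_swap[THEN iffD1, OF T] by (simp add: case_prod_unfold)
  have "(H has_sum T) S"
  proof (rule has_sum_Sigma'[OF T'])
    fix j assume "j \<in> S"
    then show "((\<lambda>n. case (j, n) of (j, n) \<Rightarrow> F n j) has_sum H j) UNIV"
      using sums_nonneg_imp_has_sum[OF cols nn] by simp
  qed
  then show ?thesis using TG by simp
qed

context qchain
begin

definition gam :: "nat \<Rightarrow> nat \<Rightarrow> real" where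
  "gam i k = suminf (\<lambda>n. ta i n k)"

lemma has_sum_supp_finite:
  fixes i n :: nat
  assumes "1 \<le> i" "\<And>j. F j \<noteq> 0 \<Longrightarrow> j \<in> {1..i+n}"
  shows "(F has_sum (\<Sum>j\<in>{1..i+n}. F j)) {1..}"
  by (rule has_sum_finite_neutralI) (use assms in auto)

lemma occ_summable:
  assumes i: "1 \<le> i" and L: "lyap c W i" and cnn: "\<And>k. 1 \<le> k \<Longrightarrow> 0 \<le> c k"
  shows "summable (occ c i)"
proof (rule summableI_nonneg_bounded[where x="c i + Pf i W"])
  fix n show "0 \<le> occ c i n"
    unfolding occ_def by (rule sum_nonneg) (use ta_nonneg[OF i] cnn in auto)
next
  fix n
  have "0 \<le> (\<Sum>k\<in>{1..i+n}. ta i n k * W k)"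
    by (rule sum_nonneg) (use ta_nonneg[OF i] L in \<open>auto simp: lyap_def\<close>)
  then show "(\<Sum>m<n. occ c i m) \<le> c i + Pf i W" using occ_bound[OF i L cnn[OF i], of n] by simp
qed

lemma ta_summable:
  assumes i: "1 \<le> i" and L: "lyap c W i" and cpos: "\<And>k. 1 \<le> k \<Longrightarrow> 0 < c k"
  shows "summable (\<lambda>n. ta i n k)"
proof (cases "1 \<le> k")
  case False
  then have "ta i n k = 0" for n using ta_supp[OF i] by force
  then show ?thesis by simp
next
  case True
  have os: "summable (occ c i)" by (rule occ_summable[OF i L]) (use cpos in \<open>auto intro: less_imp_le\<close>)
  show ?thesis
  proof (rule summable_comparison_test'[where g="\<lambda>n. occ c i n / c k" and N=0])
    show "summable (\<lambda>n. occ c i n / c k)" using os by (rule summable_divide)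
  next
    fix n :: nat
    have "ta i n k * c k \<le> occ c i n"
    proof (cases "ta i n k = 0")
      case True
      have "0 \<le> occ c i n" unfolding occ_def
      proof (rule sum_nonneg)
        fix x assume "x \<in> {1..i+n}"
        then have "0 < c x" using cpos by auto
        then show "0 \<le> ta i n x * c x" using ta_nonneg[OF i, of n x] by simp
      qed
      then show ?thesis using True by simp
    next
      case False
      then have k: "k \<in> {1..i+n}" using ta_supp[OF i] by auto
      show ?thesis unfolding occ_def
      proof (rule member_le_sum[OF k])
        fix x assume "x \<in> {1..i+n} - {k}"
        then have "0 < c x" using cpos by auto
        then show "0 \<le> ta i n x * c x" using ta_nonneg[OF i, of n x] by simp
      qed simp
    qed
    then show "norm (ta i n k) \<le> occ c i n / c k"
      using ta_nonneg[OF i] cpos[OF True] by (simp add: pos_le_divide_eq)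
  qed
qed

lemma gam_i: "1 \<le> i \<Longrightarrow> gam i i = 1"
proof -
  have "ta i n i = (if n = 0 then 1 else 0)" for n by (cases n) auto
  then have "(\<lambda>n. ta i n i) = (\<lambda>n. if n = 0 then 1 else 0)" by auto
  then show ?thesis using sums_single[of 0 "\<lambda>_. 1::real"] unfolding gam_def by (simp add: sums_iff)
qed

lemma gam_nonneg: "1 \<le> i \<Longrightarrow> summable (\<lambda>n. ta i n k) \<Longrightarrow> 0 \<le> gam i k"
  unfolding gam_def by (rule suminf_nonneg) (auto intro: ta_nonneg)

lemma gam_occ:
  assumes i: "1 \<le> i" and sm: "\<And>k. summable (\<lambda>n. ta i n k)"
    and os: "summable (occ c i)" and cnn: "\<And>k. 1 \<le> k \<Longrightarrow> 0 \<le> c k"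
  shows "((\<lambda>j. gam i j * c j) has_sum suminf (occ c i)) {1..}"
proof (rule tonelli_nat[where F="\<lambda>n j. ta i n j * c j"])
  fix n j :: nat assume "j \<in> {1..}" then show "0 \<le> ta i n j * c j" using ta_nonneg[OF i] cnn by auto
next
  fix n
  show "((\<lambda>j. ta i n j * c j) has_sum occ c i n) {1..}"
    unfolding occ_def by (rule has_sum_supp_finite[OF i]) (use ta_supp[OF i] in force)
next
  fix j :: nat
  show "(\<lambda>n. ta i n j * c j) sums (gam i j * c j)"
    unfolding gam_def by (rule sums_mult2[OF summable_sums[OF sm]])
qed (rule os)

lemma gam_inv:
  assumes i: "1 \<le> i" and sm: "\<And>k. summable (\<lambda>n. ta i n k)" and rs: "rt i sums 1" and k: "1 \<le> k"
  shows "((\<lambda>j. gam i j * P j k) has_sum gam i k) {1..}"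
proof (cases "k = i")
  case True
  have "((\<lambda>j. gam i j * P j k) has_sum suminf (rt i)) {1..}"
  proof (rule tonelli_nat[where F="\<lambda>n j. ta i n j * P j k"])
    fix n j :: nat assume "j \<in> {1..}" then show "0 \<le> ta i n j * P j k" using ta_nonneg[OF i] P_nonneg by auto
  next
    fix n
    show "((\<lambda>j. ta i n j * P j k) has_sum rt i n) {1..}"
      unfolding rt_def True by (rule has_sum_supp_finite[OF i]) (use ta_supp[OF i] in force)
  next
    fix j :: nat
    show "(\<lambda>n. ta i n j * P j k) sums (gam i j * P j k)"
      unfolding gam_def by (rule sums_mult2[OF summable_sums[OF sm]])
  qed (rule sums_summable[OF rs])
  then show ?thesis using sums_unique[OF rs] gam_i[OF i] True by simp
next
  case False
  have shift: "(\<lambda>n. ta i (Suc n) k) sums gam i k"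
  proof -
    have "(\<lambda>n. ta i n k) sums gam i k" unfolding gam_def by (rule summable_sums[OF sm])
    then show ?thesis using sums_Suc_iff[of "\<lambda>n. ta i n k" "gam i k"] False by simp
  qed
  have "((\<lambda>j. gam i j * P j k) has_sum suminf (\<lambda>n. ta i (Suc n) k)) {1..}"
  proof (rule tonelli_nat[where F="\<lambda>n j. ta i n j * P j k"])
    fix n j :: nat assume "j \<in> {1..}" then show "0 \<le> ta i n j * P j k" using ta_nonneg[OF i] P_nonneg by auto
  next
    fix n
    show "((\<lambda>j. ta i n j * P j k) has_sum ta i (Suc n) k) {1..}"
      unfolding ta.simps if_not_P[OF False] by (rule has_sum_supp_finite[OF i]) (use ta_supp[OF i] in force)
  next
    fix j :: nat
    show "(\<lambda>n. ta i n j * P j k) sums (gam i j * P j k)"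
      unfolding gam_def by (rule sums_mult2[OF summable_sums[OF sm]])
  qed (rule sums_summable[OF shift])
  then show ?thesis using sums_unique[OF shift] by simp
qed

end

lemma has_sum_diff':
  fixes f g :: "'a \<Rightarrow> real"
  assumes f: "(f has_sum a) A" and g: "(g has_sum b) A"
  shows "((\<lambda>x. f x - g x) has_sum (a - b)) A"
proof -
  have "((\<lambda>x. - g x) has_sum - b) A" by (rule has_sum_uminusI[OF g])
  from has_sum_add[OF f this] show ?thesis by simp
qed

lemma has_sum_indicator_nat:
  fixes k :: nat and v :: real
  assumes "1 \<le> k"
  shows "((\<lambda>j. if j = k then v else 0) has_sum v) {1..}"
  by (rule has_sum_finite_neutralI[where B="{k}"]) (use assms in auto)

context qchain
begin

lemma stationary_exists:
  assumes i: "1 \<le> i" and L: "lyap (\<lambda>k. 1 / qrate Q k) W i"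
    and \<Lambda>: "\<Lambda> > 0" and qup: "\<And>k. 1 \<le> k \<Longrightarrow> qrate Q k \<le> \<Lambda> * real (k + 1)"
  shows "\<exists>\<pi>. stationary_distribution Q {1..} \<pi>"
proof -
  define c where "c = (\<lambda>k. 1 / qrate Q k)"
  have cpos: "0 < c k" if "1 \<le> k" for k using qpos[OF that] by (simp add: c_def)
  have cnn: "0 \<le> c k" if "1 \<le> k" for k using cpos[OF that] by simp
  have clow: "1 / (\<Lambda> * real (k+1)) \<le> c k" if "1 \<le> k" for k
    unfolding c_def using qpos[OF that] qup[OF that] \<Lambda>
    by (intro divide_left_mono) auto
  have L': "lyap c W i" using L by (simp add: c_def)
  have rs: "rt i sums 1" by (rule return_sums[OF i L' cnn \<Lambda> clow])
  have sm: "summable (\<lambda>n. ta i n k)" for k by (rule ta_summable[OF i L' cpos])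
  have os: "summable (occ c i)" by (rule occ_summable[OF i L' cnn])
  define m where "m = suminf (occ c i)"
  have occnn: "0 \<le> occ c i n" for n
    unfolding occ_def by (rule sum_nonneg) (use ta_nonneg[OF i] cnn in \<open>auto intro!: mult_nonneg_nonneg\<close>)
  have "occ c i 0 \<le> m"
    using sum_le_suminf[OF os, of "{..<1}"] occnn unfolding m_def by simp
  moreover have "occ c i 0 = c i" by (rule occ_Suc[OF i])
  ultimately have mpos: "0 < m" using cpos[OF i] by simp
  define \<pi> where "\<pi> j = gam i j * c j / m" for j
  have gnn: "0 \<le> gam i j" for j by (rule gam_nonneg[OF i sm])
  have A: "\<forall>j\<in>{1..}. 0 \<le> \<pi> j"
    unfolding \<pi>_def using gnn cnn mpos by auto
  have go: "((\<lambda>j. gam i j * c j) has_sum m) {1..}"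
    unfolding m_def by (rule gam_occ[OF i sm os cnn])
  have B: "(\<pi> has_sum 1) {1..}"
    using has_sum_cmult_left[OF go, of "1 / m"] mpos unfolding \<pi>_def by simp
  have C: "((\<lambda>j. \<pi> j * Q j k) has_sum 0) {1..}" if k: "k \<in> {1..}" for k
  proof -
    have k1: "1 \<le> k" using k by simp
    have h: "((\<lambda>j. gam i j * P j k - (if j = k then gam i k else 0)) has_sum (gam i k - gam i k)) {1..}"
      by (rule has_sum_diff'[OF gam_inv[OF i sm rs k1] has_sum_indicator_nat[OF k1]])
    have "((\<lambda>j. (gam i j * P j k - (if j = k then gam i k else 0)) * (1 / m)) has_sum 0) {1..}"
      using has_sum_cmult_left[OF h, of "1 / m"] by simp
    moreover have "(gam i j * P j k - (if j = k then gam i k else 0)) * (1 / m) = \<pi> j * Q j k"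
      if j: "j \<in> {1..}" for j
    proof (cases "j = k")
      case True
      then show ?thesis using j qpos[of j] by (simp add: \<pi>_def c_def P_diag qrate_def)
    next
      case False
      then show ?thesis using j qpos[of j] by (simp add: \<pi>_def c_def P_eq)
    qed
    ultimately show ?thesis using has_sum_cong by (metis (no_types, lifting))
  qed
  have "stationary_distribution Q {1..} \<pi>"
    unfolding stationary_distribution_def using A B C by blast
  then show ?thesis by blast
qed

end

context qchain
begin

lemma stationary_moment:
  assumes i: "1 \<le> i" and L: "lyap (\<lambda>k. 1 / qrate Q k) W i"
    and \<Lambda>: "\<Lambda> > 0" and qup: "\<And>k. 1 \<le> k \<Longrightarrow> qrate Q k \<le> \<Lambda> * real (k + 1)"
    and irr: "\<And>j. 1 \<le> j \<Longrightarrow> j \<noteq> i \<Longrightarrow> 0 < P j i"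
    and fnn: "\<And>k. 1 \<le> k \<Longrightarrow> 0 \<le> f k"
    and Lf: "lyap (\<lambda>k. f k / qrate Q k) Wf i"
    and st: "stationary_distribution Q {1..} \<pi>"
  shows "(\<lambda>j. \<pi> j * f j) summable_on {1..}"
proof -
  define c where "c = (\<lambda>k. 1 / qrate Q k)"
  have cpos: "0 < c k" if "1 \<le> k" for k using qpos[OF that] by (simp add: c_def)
  have cnn: "0 \<le> c k" if "1 \<le> k" for k using cpos[OF that] by simp
  have clow: "1 / (\<Lambda> * real (k+1)) \<le> c k" if "1 \<le> k" for k
    unfolding c_def using qpos[OF that] qup[OF that] \<Lambda>
    by (intro divide_left_mono) auto
  have L': "lyap c W i" using L by (simp add: c_def)
  have rs: "rt i sums 1" by (rule return_sums[OF i L' cnn \<Lambda> clow])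
  have sm: "summable (\<lambda>n. ta i n k)" for k by (rule ta_summable[OF i L' cpos])
  have gnn: "0 \<le> gam i j" for j by (rule gam_nonneg[OF i sm])
  define \<mu> where "\<mu> j = \<pi> j * qrate Q j" for j
  have \<pi>nn: "0 \<le> \<pi> j" if "1 \<le> j" for j using st that by (auto simp: stationary_distribution_def)
  have \<mu>nn: "0 \<le> \<mu> j" if "1 \<le> j" for j using \<pi>nn[OF that] qpos[OF that] by (simp add: \<mu>_def)
  have inv: "((\<lambda>j. \<mu> j * P j k) has_sum \<mu> k) {1..}" if k: "1 \<le> k" for k
  proof -
    have s0: "((\<lambda>j. \<pi> j * Q j k) has_sum 0) {1..}" using st k by (auto simp: stationary_distribution_def)
    have eq: "\<pi> j * Q j k = \<mu> j * P j k - (if j = k then \<mu> k else 0)" if j: "j \<in> {1..}" for j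
    proof (cases "j = k")
      case True
      then show ?thesis using j by (simp add: \<mu>_def P_diag qrate_def)
    next
      case False
      then show ?thesis using j qpos[of j] by (simp add: \<mu>_def P_eq)
    qed
    have "((\<lambda>j. \<mu> j * P j k - (if j = k then \<mu> k else 0)) has_sum 0) {1..}"
      using s0 has_sum_cong[of "{1..}" "\<lambda>j. \<pi> j * Q j k" "\<lambda>j. \<mu> j * P j k - (if j = k then \<mu> k else 0)"] eq by blast
    from has_sum_add[OF this has_sum_indicator_nat[OF k, of "\<mu> k"]] show ?thesis by simp
  qed
  have lowb: "\<mu> i * (\<Sum>n<N. ta i n k) \<le> \<mu> k" if "1 \<le> k" for N k
    using that
  proof (induction N arbitrary: k)
    case 0
    then show ?case using \<mu>nn by simp
  next
    case (Suc N)
    show ?case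
    proof (cases "k = i")
      case True
      have "(\<Sum>n<Suc N. ta i n k) = 1"
        unfolding sum.lessThan_Suc_shift using True by simp
      then show ?thesis using True by simp
    next
      case False
      have "(\<Sum>n<Suc N. ta i n k) = (\<Sum>n<N. ta i (Suc n) k)"
        unfolding sum.lessThan_Suc_shift using False by simp
      also have "\<dots> = (\<Sum>n<N. \<Sum>j\<in>{1..i+N}. ta i n j * P j k)"
      proof (rule sum.cong[OF refl])
        fix n assume n: "n \<in> {..<N}"
        have "(\<Sum>j\<in>{1..i+n}. ta i n j * P j k) = (\<Sum>j\<in>{1..i+N}. ta i n j * P j k)"
        proof (rule sum.mono_neutral_left)
          show "\<forall>j\<in>{1..i+N} - {1..i+n}. ta i n j * P j k = 0"
            using ta_supp[OF i, of n] by force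
        qed (use n in auto)
        then show "ta i (Suc n) k = (\<Sum>j\<in>{1..i+N}. ta i n j * P j k)" using False by simp
      qed
      also have "\<dots> = (\<Sum>j\<in>{1..i+N}. (\<Sum>n<N. ta i n j) * P j k)"
        by (simp add: sum.swap[of _ "{..<N}"] sum_distrib_right)
      finally have eq: "(\<Sum>n<Suc N. ta i n k) = (\<Sum>j\<in>{1..i+N}. (\<Sum>n<N. ta i n j) * P j k)" .
      have "\<mu> i * (\<Sum>n<Suc N. ta i n k) = (\<Sum>j\<in>{1..i+N}. (\<mu> i * (\<Sum>n<N. ta i n j)) * P j k)"
        unfolding eq by (subst sum_distrib_left) (simp only: mult.assoc)
      also have "\<dots> \<le> (\<Sum>j\<in>{1..i+N}. \<mu> j * P j k)"
        by (rule sum_mono, rule mult_right_mono) (use Suc.IH P_nonneg in auto)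
      also have "\<dots> \<le> \<mu> k"
        by (rule finite_sum_le_has_sum[OF inv[OF Suc.prems]]) (use \<mu>nn P_nonneg in auto)
      finally show ?thesis .
    qed
  qed
  have gle: "\<mu> i * gam i k \<le> \<mu> k" if "1 \<le> k" for k
  proof -
    have "\<mu> i * gam i k = (\<Sum>n. \<mu> i * ta i n k)" unfolding gam_def by (rule suminf_mult[OF sm, symmetric])
    also have "\<dots> \<le> \<mu> k"
      by (rule suminf_le_const[OF summable_mult[OF sm]]) (use lowb[OF that] in \<open>simp add: sum_distrib_left\<close>)
    finally show ?thesis .
  qed
  define \<nu> where "\<nu> k = \<mu> k - \<mu> i * gam i k" for k
  have \<nu>nn: "0 \<le> \<nu> k" if "1 \<le> k" for k using gle[OF that] by (simp add: \<nu>_def)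
  have \<nu>i: "\<nu> i = 0" by (simp add: \<nu>_def gam_i[OF i])
  have \<nu>inv: "((\<lambda>j. \<nu> j * P j k) has_sum \<nu> k) {1..}" if k: "1 \<le> k" for k
  proof -
    have "((\<lambda>j. \<mu> i * (gam i j * P j k)) has_sum \<mu> i * gam i k) {1..}"
      by (rule has_sum_cmult_right[OF gam_inv[OF i sm rs k]])
    from has_sum_diff'[OF inv[OF k] this] show ?thesis
      by (simp add: \<nu>_def algebra_simps)
  qed
  have \<nu>0: "\<nu> j = 0" if j: "1 \<le> j" for j
  proof (cases "j = i")
    case True then show ?thesis using \<nu>i by simp
  next
    case False
    have "(\<Sum>x\<in>{j}. \<nu> x * P x i) \<le> \<nu> i"
      by (rule finite_sum_le_has_sum[OF \<nu>inv[OF i]]) (use j \<nu>nn P_nonneg in auto)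
    then have "\<nu> j * P j i \<le> 0" using \<nu>i by simp
    then have "\<nu> j \<le> 0" using irr[OF j False] by (simp add: mult_le_0_iff)
    then show ?thesis using \<nu>nn[OF j] by simp
  qed
  define cf where "cf = (\<lambda>k. f k / qrate Q k)"
  have cfnn: "0 \<le> cf k" if "1 \<le> k" for k using fnn[OF that] qpos[OF that] by (simp add: cf_def)
  have Lf': "lyap cf Wf i" using Lf by (simp add: cf_def)
  have osf: "summable (occ cf i)" by (rule occ_summable[OF i Lf' cfnn])
  have gof: "((\<lambda>j. gam i j * cf j) has_sum suminf (occ cf i)) {1..}"
    by (rule gam_occ[OF i sm osf cfnn])
  have "((\<lambda>j. \<mu> i * (gam i j * cf j)) has_sum \<mu> i * suminf (occ cf i)) {1..}"
    by (rule has_sum_cmult_right[OF gof])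
  moreover have "\<mu> i * (gam i j * cf j) = \<pi> j * f j" if j: "j \<in> {1..}" for j
  proof -
    have "\<mu> j = \<mu> i * gam i j" using \<nu>0[of j] j by (simp add: \<nu>_def)
    then have "\<pi> j = \<mu> i * gam i j / qrate Q j" using qpos[of j] j by (simp add: \<mu>_def field_simps)
    then show ?thesis by (simp add: cf_def)
  qed
  ultimately have "((\<lambda>j. \<pi> j * f j) has_sum \<mu> i * suminf (occ cf i)) {1..}"
    using has_sum_cong by (metis (no_types, lifting))
  then show ?thesis by (auto simp: summable_on_def)
qed

end

lemma qrate_Qbar: "1 \<le> j \<Longrightarrow> qrate (Qbar p) j = (2 + real j) * p - p ^ j"
  by (simp add: qrate_def Qbar_def)

lemma sum_shift1: "(\<Sum>k\<in>{1..n}. f k) = (\<Sum>m<n. f (Suc m))"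
  by (induction n) (auto simp: atLeastAtMostSuc_conv add.commute)

lemma binom_sum1:
  fixes p :: real
  shows "(\<Sum>m\<le>n. real (n choose m) * p ^ m * (1 - p) ^ (n - m)) = 1"
  using binomial_ring[of p "1 - p" n] by simp

lemma binom_mean:
  fixes p :: real
  shows "(\<Sum>m\<le>n. real (n choose m) * p ^ m * (1 - p) ^ (n - m) * real m) = real n * p"
proof (cases n)
  case 0
  then show ?thesis by simp
next
  case (Suc n')
  have "(\<Sum>m\<le>Suc n'. real (Suc n' choose m) * p ^ m * (1 - p) ^ (Suc n' - m) * real m)
      = (\<Sum>k\<le>n'. real (Suc n' choose Suc k) * p ^ Suc k * (1 - p) ^ (Suc n' - Suc k) * real (Suc k))"
    by (subst sum.atMost_Suc_shift) simp
  also have "\<dots> = (\<Sum>k\<le>n'. real (Suc n') * p * (real (n' choose k) * p ^ k * (1 - p) ^ (n' - k)))"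
  proof (rule sum.cong[OF refl])
    fix k assume "k \<in> {..n'}"
    have "real (Suc n' choose Suc k) * real (Suc k) = real (Suc n') * real (n' choose k)"
      using Suc_times_binomial_eq[of n' k] by (simp only: of_nat_mult[symmetric])
    moreover have "real (Suc n' choose Suc k) * p ^ Suc k * (1 - p) ^ (Suc n' - Suc k) * real (Suc k)
        = (real (Suc n' choose Suc k) * real (Suc k)) * p * (p ^ k * (1 - p) ^ (n' - k))"
      by (simp del: binomial_Suc_Suc of_nat_Suc add: algebra_simps)
    ultimately show "real (Suc n' choose Suc k) * p ^ Suc k * (1 - p) ^ (Suc n' - Suc k) * real (Suc k)
        = real (Suc n') * p * (real (n' choose k) * p ^ k * (1 - p) ^ (n' - k))"
      by (simp del: binomial_Suc_Suc of_nat_Suc add: algebra_simps)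
  qed
  also have "\<dots> = real (Suc n') * p"
    using binom_sum1[of n' p] by (simp add: sum_distrib_left[symmetric])
  finally show ?thesis using Suc by simp
qed

lemma GF:
  fixes p :: real and V :: "nat \<Rightarrow> real"
  assumes "1 \<le> j"
  shows "(\<Sum>k\<in>{1..j+1}. Qbar p j k * V k)
       = p * (\<Sum>m\<le>j-1. real ((j-1) choose m) * p ^ m * (1 - p) ^ (j - 1 - m) * V (m + 1))
         - (2 + real j) * p * V j + real (j + 1) * p * V (j + 1)"
proof -
  obtain n where n: "j = Suc n" using assms by (cases j) auto
  have "(\<Sum>k\<in>{1..j+1}. Qbar p j k * V k) = (\<Sum>m<Suc (Suc n). Qbar p j (Suc m) * V (Suc m))"
    using sum_shift1[of "\<lambda>k. Qbar p j k * V k" "Suc (Suc n)"] n by simp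
  also have "\<dots> = (\<Sum>m<n. Qbar p j (Suc m) * V (Suc m)) + Qbar p j j * V j + Qbar p j (j+1) * V (j+1)"
    using n by simp
  also have "(\<Sum>m<n. Qbar p j (Suc m) * V (Suc m))
      = (\<Sum>m<n. p * (real (n choose m) * p ^ m * (1 - p) ^ (n - m) * V (m + 1)))"
  proof (rule sum.cong[OF refl])
    fix m assume "m \<in> {..<n}"
    then have m: "m < n" by simp
    then have "Suc n - Suc m = Suc (n - Suc m)" "n - m = Suc (n - Suc m)" by auto
    then show "Qbar p j (Suc m) * V (Suc m) = p * (real (n choose m) * p ^ m * (1 - p) ^ (n - m) * V (m + 1))"
      using m n by (simp add: Qbar_def algebra_simps)
  qed
  also have "Qbar p j j = p ^ j - (2 + real j) * p" using n by (simp add: Qbar_def)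
  also have "Qbar p j (j+1) = real (j + 1) * p" using n by (simp add: Qbar_def)
  also have "(\<Sum>m\<le>j-1. real ((j-1) choose m) * p ^ m * (1 - p) ^ (j - 1 - m) * V (m + 1))
      = (\<Sum>m<n. real (n choose m) * p ^ m * (1 - p) ^ (n - m) * V (m + 1)) + p ^ n * V j"
    using n by (simp add: lessThan_Suc_atMost[symmetric])
  ultimately show ?thesis using n by (simp add: sum_distrib_left algebra_simps)
qed

lemma rowsum_Qbar:
  fixes p :: real
  assumes "1 \<le> j"
  shows "(\<Sum>k\<in>{1..j+1}. Qbar p j k) = 0"
proof -
  have "(\<Sum>k\<in>{1..j+1}. Qbar p j k * 1) = p * 1 - (2 + real j) * p * 1 + real (j + 1) * p * 1"
    using GF[OF assms, of p "\<lambda>_. 1"] binom_sum1[of "j-1" p] by simp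
  then show ?thesis by (simp add: algebra_simps)
qed

lemma qchain_Qbar:
  fixes p :: real
  assumes "0 < p" "p \<le> 1"
  shows "qchain (Qbar p)"
proof
  fix j :: nat assume j: "1 \<le> j"
  have "p ^ j \<le> p ^ 1" by (rule power_decreasing) (use j assms in auto)
  moreover have "1 * p < (2 + real j) * p" by (rule mult_strict_right_mono) (use assms in auto)
  ultimately have "p ^ j < (2 + real j) * p" by simp
  then show "0 < qrate (Qbar p) j" using qrate_Qbar[OF j, of p] by linarith
next
  fix j k :: nat assume "1 \<le> j" "k \<noteq> j"
  then show "0 \<le> Qbar p j k" using assms by (auto simp: Qbar_def)
next
  fix j k :: nat assume "1 \<le> j" "k = 0 \<or> j + 1 < k"
  then show "Qbar p j k = 0" by (auto simp: Qbar_def)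
next
  fix j :: nat assume "1 \<le> j"
  then show "(\<Sum>k\<in>{1..j+1}. Qbar p j k) = 0" by (rule rowsum_Qbar)
qed

lemma P_up_Qbar:
  fixes p :: real
  assumes "0 < p" "p \<le> 1" "1 \<le> j"
  shows "1/2 \<le> jump_prob (Qbar p) j (Suc j)"
proof -
  interpret qchain "Qbar p" by (rule qchain_Qbar[OF assms(1,2)])
  have q: "qrate (Qbar p) j = (2 + real j) * p - p ^ j" by (rule qrate_Qbar[OF assms(3)])
  have qp: "0 < qrate (Qbar p) j" by (rule qpos[OF assms(3)])
  obtain n where n: "j = Suc n" using assms(3) by (cases j) auto
  have "Qbar p j (Suc j) = real (j + 1) * p" using n by (simp add: Qbar_def)
  then have "jump_prob (Qbar p) j (Suc j) = real (j + 1) * p / qrate (Qbar p) j"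
    using assms by (simp add: P_eq)
  moreover have "qrate (Qbar p) j \<le> 2 * (real (j + 1) * p)"
  proof -
    have "qrate (Qbar p) j \<le> (2 + real j) * p" using q assms by simp
    also have "\<dots> \<le> (2 * real (j + 1)) * p" by (rule mult_right_mono) (use assms in auto)
    finally show ?thesis by (simp add: algebra_simps)
  qed
  ultimately show ?thesis using qp by (simp add: pos_le_divide_eq)
qed

lemma P_down_Qbar:
  fixes p :: real
  assumes "0 < p" "p < 1" "1 \<le> i" "i < j"
  shows "0 < jump_prob (Qbar p) j i"
proof -
  interpret qchain "Qbar p" by (rule qchain_Qbar) (use assms in auto)
  have j: "1 \<le> j" using assms by simp
  have "0 < Qbar p j i"
    using assms by (simp add: Qbar_def)
  then show ?thesis using qpos[OF j] assms by (simp add: P_eq)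
qed

lemma qup_Qbar:
  fixes p :: real
  assumes "0 < p" "1 \<le> k"
  shows "qrate (Qbar p) k \<le> (2 * p) * real (k + 1)"
proof -
  have "qrate (Qbar p) k \<le> (2 + real k) * p" using qrate_Qbar[OF assms(2), of p] assms by simp
  also have "\<dots> \<le> (2 * real (k + 1)) * p" by (rule mult_right_mono) (use assms in auto)
  finally show ?thesis by (simp add: algebra_simps)
qed

context qchain
begin

lemma Pf_eq_G:
  assumes j: "1 \<le> j"
  shows "Pf j V = (\<Sum>k\<in>{1..j+1}. Q j k * V k) / qrate Q j + V j"
proof -
  have jin: "j \<in> {1..j+1}" using j by auto
  have qp: "0 < qrate Q j" by (rule qpos[OF j])
  have eq: "P j k * V k = Q j k * V k / qrate Q j - (if k = j then Q j j * V j / qrate Q j else 0)" for k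
    using j by (simp add: P_eq)
  have "Pf j V = (\<Sum>k\<in>{1..j+1}. Q j k * V k / qrate Q j) - Q j j * V j / qrate Q j"
    unfolding Pf_def eq sum_subtractf using jin by simp
  also have "(\<Sum>k\<in>{1..j+1}. Q j k * V k / qrate Q j) = (\<Sum>k\<in>{1..j+1}. Q j k * V k) / qrate Q j"
    by (simp only: sum_divide_distrib)
  also have "Q j j * V j / qrate Q j = - V j" using qp by (simp add: qrate_def)
  finally show ?thesis by simp
qed

lemma drift_iff:
  assumes j: "1 \<le> j"
  shows "(c j + Pf j V \<le> V j) \<longleftrightarrow> (c j * qrate Q j + (\<Sum>k\<in>{1..j+1}. Q j k * V k) \<le> 0)"
proof -
  have qp: "0 < qrate Q j" by (rule qpos[OF j])
  have "(c j + Pf j V \<le> V j) \<longleftrightarrow> (c j + (\<Sum>k\<in>{1..j+1}. Q j k * V k) / qrate Q j \<le> 0)"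
    unfolding Pf_eq_G[OF j] by linarith
  also have "\<dots> \<longleftrightarrow> ((c j + (\<Sum>k\<in>{1..j+1}. Q j k * V k) / qrate Q j) * qrate Q j \<le> 0)"
    using qp by (simp add: mult_le_0_iff)
  also have "(c j + (\<Sum>k\<in>{1..j+1}. Q j k * V k) / qrate Q j) * qrate Q j
      = c j * qrate Q j + (\<Sum>k\<in>{1..j+1}. Q j k * V k)"
    using qp by (simp add: field_simps)
  finally show ?thesis .
qed

lemma patch:
  fixes V c :: "nat \<Rightarrow> real" and N i :: nat
  assumes i: "1 \<le> i" and Vnn: "\<And>k. 1 \<le> k \<Longrightarrow> 0 \<le> V k"
    and drift: "\<And>j. N \<le> j \<Longrightarrow> 1 \<le> j \<Longrightarrow> c j + Pf j V \<le> V j"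
    and up: "\<And>j. 1 \<le> j \<Longrightarrow> 1/2 \<le> P j (Suc j)"
    and down: "\<And>j. i < j \<Longrightarrow> 0 < P j i"
  shows "\<exists>W. lyap c W i"
proof -
  define N' where "N' = max N (i+1)"
  define dr where "dr j = c j + Pf j V - V j" for j
  define B0 where "B0 = (\<Sum>j\<in>{1..N'}. \<bar>dr j\<bar>)"
  have B0nn: "0 \<le> B0" unfolding B0_def by (rule sum_nonneg) auto
  have drB: "dr j \<le> B0" if "1 \<le> j" "j \<le> N'" for j
  proof -
    have "\<bar>dr j\<bar> \<le> B0" unfolding B0_def by (rule member_le_sum) (use that in auto)
    then show ?thesis by simp
  qed
  have drN: "dr j \<le> 0" if "N' < j" for j
    using drift[of j] that unfolding dr_def N'_def by auto
  define S where "S = (\<Sum>m\<in>{i+1..N'}. 1 / P m i)"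
  have Snn: "0 \<le> S" unfolding S_def by (rule sum_nonneg) (use down in \<open>auto intro: less_imp_le\<close>)
  define A where "A = V i + 2^(i+1) * B0 + B0 * S"
  have Vi: "0 \<le> V i" by (rule Vnn[OF i])
  have AVi: "V i \<le> A" unfolding A_def using B0nn Snn by simp
  have A2: "2^(i+1) * B0 \<le> A" unfolding A_def using B0nn Snn Vi by simp
  have Ann: "0 \<le> A" using AVi Vi by simp
  have AP: "B0 \<le> A * P m i" if m: "m \<in> {i+1..N'}" for m
  proof -
    have Pm: "0 < P m i" using down m by auto
    have "1 / P m i \<le> S" unfolding S_def by (rule member_le_sum[OF m]) (use down in \<open>auto intro: less_imp_le\<close>)
    then have "B0 * (1 / P m i) \<le> B0 * S" by (rule mult_left_mono) (rule B0nn)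
    also have "\<dots> \<le> A" unfolding A_def using Vi B0nn by simp
    finally have "B0 / P m i \<le> A" by simp
    then show ?thesis using Pm by (simp add: pos_divide_le_eq)
  qed
  define d where "d j = (if j \<le> i then (V i + A) / 2^(i-j) - 2*B0*(1 - 1/2^(i-j)) else 0)" for j
  have d_nn: "0 \<le> d j" for j
  proof (cases "j \<le> i")
    case True
    have p1: "(2::real)^(i-j) \<le> 2^i" by (rule power_increasing) auto
    have "2 * B0 \<le> A / 2^i"
      using A2 by (simp add: pos_le_divide_eq algebra_simps)
    also have "A / 2^i \<le> A / 2^(i-j)" by (rule divide_left_mono) (use p1 Ann in auto)
    also have "\<dots> \<le> (V i + A) / 2^(i-j)" by (rule divide_right_mono) (use Vi in auto)
    finally have "2 * B0 \<le> (V i + A) / 2^(i-j)" .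
    moreover have "2*B0*(1 - 1/2^(i-j)) \<le> 2 * B0" using B0nn by (simp add: mult_left_le)
    ultimately show ?thesis using True by (simp add: d_def)
  qed (simp add: d_def)
  have d_i: "d i = V i + A" by (simp add: d_def)
  have d_le: "d j \<le> V j + A" if j: "1 \<le> j" for j
  proof (cases "j < i")
    case True
    have ij: "1 \<le> i - j" using True by simp
    have "(2::real)^1 \<le> 2^(i-j)" by (rule power_increasing[OF ij]) simp
    then have p1: "(2::real) \<le> 2^(i-j)" by simp
    have "d j \<le> (V i + A) / 2^(i-j)" using B0nn True by (simp add: d_def mult_nonneg_nonneg)
    also have "\<dots> \<le> (V i + A) / 2" by (rule divide_left_mono) (use p1 Vi Ann in auto)
    also have "\<dots> \<le> A" using AVi by simp
    finally show ?thesis using Vnn[OF j] by simp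
  next
    case False
    then show ?thesis using Vnn[OF j] Ann d_i by (cases "j = i") (auto simp: d_def)
  qed
  have d_rec: "d j = d (Suc j) / 2 - B0" if "j < i" for j
  proof -
    have e: "(2::real)^(i-j) = 2 * 2^(i - Suc j)" using that by (simp add: Suc_diff_Suc power_Suc[symmetric])
    show ?thesis using that unfolding d_def e by (simp add: field_simps)
  qed
  define W where "W j = V j + A - d j" for j
  have PfW: "Pf j W = Pf j V + A - Pf j d" if j: "1 \<le> j" for j
  proof -
    have "Pf j W = (\<Sum>k\<in>{1..j+1}. P j k * V k + A * P j k - P j k * d k)"
      unfolding Pf_def W_def by (rule sum.cong) (auto simp: algebra_simps)
    also have "\<dots> = Pf j V + A * (\<Sum>k\<in>{1..j+1}. P j k) - Pf j d"
      unfolding Pf_def by (simp only: sum.distrib sum_subtractf sum_distrib_left)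
    finally show ?thesis using P_sum[OF j] by simp
  qed
  have Pfd_ge: "P j m * d m \<le> Pf j d" if "1 \<le> j" "m \<in> {1..j+1}" for j m
    unfolding Pf_def by (rule member_le_sum[OF that(2)]) (use that P_nonneg d_nn in auto)
  have Pfd_nn: "0 \<le> Pf j d" if "1 \<le> j" for j
    unfolding Pf_def by (rule sum_nonneg) (use that P_nonneg d_nn in auto)
  have key: "dr j + d j \<le> Pf j d" if j: "1 \<le> j" "j \<noteq> i" for j
  proof (cases "N' < j")
    case True
    then have "d j = 0" unfolding d_def N'_def by auto
    then show ?thesis using drN[OF True] Pfd_nn[OF j(1)] by simp
  next
    case False
    show ?thesis
    proof (cases "i < j")
      case True
      then have dj: "d j = 0" unfolding d_def by auto
      have m: "j \<in> {i+1..N'}" using True False by auto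
      have "dr j \<le> B0" using drB j False by auto
      also have "\<dots> \<le> A * P j i" by (rule AP[OF m])
      also have "\<dots> \<le> P j i * d i" using d_i Vi P_nonneg[OF j(1), of i] by (simp add: algebra_simps mult_left_mono)
      also have "\<dots> \<le> Pf j d" by (rule Pfd_ge) (use j i True in auto)
      finally show ?thesis using dj by simp
    next
      case False2: False
      then have ji: "j < i" using j by auto
      have "dr j \<le> B0" using drB j ji unfolding N'_def by auto
      moreover have "d j = d (Suc j) / 2 - B0" by (rule d_rec[OF ji])
      moreover have "(1/2) * d (Suc j) \<le> P j (Suc j) * d (Suc j)"
        by (rule mult_right_mono[OF up[OF j(1)] d_nn])
      then have "d (Suc j) / 2 \<le> P j (Suc j) * d (Suc j)" by simp
      moreover have "P j (Suc j) * d (Suc j) \<le> Pf j d" by (rule Pfd_ge) (use j in auto)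
      ultimately show ?thesis by linarith
    qed
  qed
  have "lyap c W i"
    unfolding lyap_def
  proof (intro conjI allI impI)
    fix k :: nat assume "1 \<le> k" then show "0 \<le> W k" using d_le unfolding W_def by force
  next
    show "W i = 0" unfolding W_def d_i by simp
  next
    fix j :: nat assume j: "1 \<le> j" "j \<noteq> i"
    show "c j + Pf j W \<le> W j" using key[OF j] PfW[OF j(1)] unfolding W_def dr_def by linarith
  qed
  then show ?thesis by blast
qed

end

lemma concave_tangent:
  fixes g g' g'' :: "real \<Rightarrow> real" and a :: real
  assumes d1: "\<And>x. a < x \<Longrightarrow> (g has_real_derivative g' x) (at x)"
    and d2: "\<And>x. a < x \<Longrightarrow> (g' has_real_derivative g'' x) (at x)"
    and neg: "\<And>x. a < x \<Longrightarrow> g'' x \<le> 0"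
    and x: "a < x" and y: "a < y"
  shows "g x \<le> g y + g' y * (x - y)"
proof -
  have cv: "convex_on {a<..} (\<lambda>x. - g x)"
  proof (rule f''_ge0_imp_convex[where f'="\<lambda>x. - g' x" and f''="\<lambda>x. - g'' x"])
    show "convex {a<..}" by simp
  next
    fix x assume "x \<in> {a<..}"
    then show "((\<lambda>x. - g x) has_real_derivative - g' x) (at x)" using d1 by (auto intro: DERIV_minus)
  next
    fix x assume "x \<in> {a<..}"
    then show "((\<lambda>x. - g' x) has_real_derivative - g'' x) (at x)" using d2 by (auto intro: DERIV_minus)
  next
    fix x assume "x \<in> {a<..}"
    then show "0 \<le> - g'' x" using neg by auto
  qed
  have "(- g' y) * (x - y) \<le> (- g x) - (- g y)"
  proof (rule convex_on_imp_above_tangent[OF cv])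
    show "connected {a<..}" by simp
    show "y \<in> interior {a<..}" using y by (simp add: interior_open)
    show "x \<in> {a<..}" using x by simp
    show "((\<lambda>x. - g x) has_real_derivative - g' y) (at y within {a<..})"
      using d1[OF y] by (auto intro: DERIV_minus has_field_derivative_at_within)
  qed
  then show ?thesis by (simp add: algebra_simps)
qed

definition phi :: "real \<Rightarrow> real \<Rightarrow> real \<Rightarrow> real \<Rightarrow> real" where
  "phi q r K x = q * ln x - r * ln (ln (x + K))"
definition phi1 :: "real \<Rightarrow> real \<Rightarrow> real \<Rightarrow> real \<Rightarrow> real" where
  "phi1 q r K x = q / x - r / ((x + K) * ln (x + K))"
definition phi2 :: "real \<Rightarrow> real \<Rightarrow> real \<Rightarrow> real \<Rightarrow> real" where
  "phi2 q r K x = - q / x^2 + r * (ln (x + K) + 1) / ((x + K) * ln (x + K))^2"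
definition gg :: "real \<Rightarrow> real \<Rightarrow> real \<Rightarrow> real \<Rightarrow> real" where
  "gg q r K x = exp (phi q r K x)"

lemma lnK_pos: fixes K x :: real shows "0 < K \<Longrightarrow> 1 \<le> ln K \<Longrightarrow> 0 < x \<Longrightarrow> 1 \<le> ln (x + K)"
proof -
  assume a: "0 < K" "1 \<le> ln K" "0 < x"
  then have "ln K \<le> ln (x + K)" by (subst ln_le_cancel_iff) auto
  then show ?thesis using a(2) by linarith
qed

lemma phi_deriv:
  assumes K0: "0 < K" and K: "1 \<le> ln K" and x: "0 < x"
  shows "(phi q r K has_real_derivative phi1 q r K x) (at x)"
proof -
  have xK: "0 < x + K" using x K0 by simp
  have L: "0 < ln (x + K)" using lnK_pos[OF K0 K x] by simp
  show ?thesis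
    unfolding phi_def phi1_def
    by (rule derivative_eq_intros refl | use x xK L in simp)+
qed

locale gpar =
  fixes q r K :: real
  assumes q0: "0 < q" and q1: "q < 1" and r0: "0 \<le> r" and K0: "0 < K" and K1: "1 \<le> ln K"
    and K2: "2 * r / (q * (1 - q)) \<le> ln K"
begin

lemma L_ge: "0 < x \<Longrightarrow> 1 \<le> ln (x + K) \<and> 2 * r / (q * (1 - q)) \<le> ln (x + K)"
proof -
  assume x: "0 < x"
  have "ln K \<le> ln (x + K)" using x K0 by (subst ln_le_cancel_iff) auto
  then show ?thesis using K1 K2 by linarith
qed

lemma phi1_deriv:
  assumes x: "0 < x"
  shows "(phi1 q r K has_real_derivative phi2 q r K x) (at x)"
proof -
  have xK: "0 < x + K" using x K0 by simp
  have L: "0 < ln (x + K)" using L_ge[OF x] by simp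
  have nz: "(x + K) * ln (x + K) \<noteq> 0" using xK L by simp
  have hA: "((\<lambda>x. (x + K) * ln (x + K)) has_real_derivative (ln (x + K) + 1)) (at x)"
    using xK by (auto intro!: derivative_eq_intros)
  have hB: "((\<lambda>x. inverse ((x + K) * ln (x + K))) has_real_derivative
      - ((ln (x + K) + 1) * inverse (((x + K) * ln (x + K)) ^ Suc (Suc 0)))) (at x)"
    by (rule DERIV_inverse_fun[OF hA nz])
  have hC: "((\<lambda>x. inverse x) has_real_derivative - (1 * inverse (x ^ Suc (Suc 0)))) (at x)"
    by (rule DERIV_inverse_fun[OF DERIV_ident]) (use x in simp)
  have "((\<lambda>x. q * inverse x - r * inverse ((x + K) * ln (x + K))) has_real_derivative
      q * (- (1 * inverse (x ^ Suc (Suc 0)))) - r * (- ((ln (x + K) + 1) * inverse (((x + K) * ln (x + K)) ^ Suc (Suc 0))))) (at x)"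
    by (rule DERIV_diff[OF DERIV_cmult[OF hC] DERIV_cmult[OF hB]])
  then show ?thesis
    unfolding phi1_def phi2_def
    by (simp add: divide_inverse power2_eq_square) (simp add: field_simps)
qed

lemma gg_deriv:
  assumes x: "0 < x"
  shows "(gg q r K has_real_derivative gg q r K x * phi1 q r K x) (at x)"
  unfolding gg_def by (rule DERIV_fun_exp[OF phi_deriv[OF K0 K1 x]])

lemma gg1_deriv:
  assumes x: "0 < x"
  shows "((\<lambda>x. gg q r K x * phi1 q r K x) has_real_derivative gg q r K x * (phi2 q r K x + (phi1 q r K x)^2)) (at x)"
proof -
  from DERIV_mult[OF gg_deriv[OF x] phi1_deriv[OF x]]
  show ?thesis by (rule DERIV_cong) (simp add: algebra_simps power2_eq_square)
qed

lemma sign: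
  assumes x: "0 < x"
  shows "phi2 q r K x + (phi1 q r K x)^2 \<le> 0"
proof -
  define L where "L = ln (x + K)"
  define y where "y = x + K"
  have L1: "1 \<le> L" and L2: "2 * r / (q * (1 - q)) \<le> L" using L_ge[OF x] by (auto simp: L_def)
  have y: "x \<le> y" "0 < y" using K0 x by (auto simp: y_def)
  define a where "a = q / x"
  define b where "b = r / (y * L)"
  have a0: "0 < a" using q0 x by (simp add: a_def)
  have b0: "0 \<le> b" using r0 y L1 by (simp add: b_def)
  have qq: "0 < q * (1 - q)" using q0 q1 by simp
  have rL: "2 * r \<le> L * (q * (1 - q))" using L2 qq by (simp add: pos_divide_le_eq)
  have r_le: "r \<le> 2 * q * L"
  proof -
    have "q * (1 - q) \<le> 2 * q" using q0 q1 by (simp add: algebra_simps)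
    then have "L * (q * (1 - q)) \<le> L * (2 * q)" using L1 by (intro mult_left_mono) auto
    then show ?thesis using rL r0 by (simp add: algebra_simps)
  qed
  have b2a: "b \<le> 2 * a"
  proof -
    have "b \<le> r / (x * L)" unfolding b_def using r0 y L1 x
      by (intro divide_left_mono mult_right_mono mult_pos_pos) auto
    also have "r / (x * L) \<le> 2 * q * L / (x * L)" using r_le x L1 by (intro divide_right_mono) auto
    also have "\<dots> = 2 * a" using L1 x by (simp add: a_def)
    finally show ?thesis .
  qed
  have p1: "phi1 q r K x = a - b" by (simp add: phi1_def a_def b_def y_def L_def)
  have sq: "(a - b)^2 \<le> a^2"
  proof -
    have "(a - b)^2 - a^2 = b * (b - 2 * a)" by (simp add: power2_eq_square algebra_simps)
    also have "\<dots> \<le> 0" using b0 b2a by (simp add: mult_nonneg_nonpos)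
    finally show ?thesis by simp
  qed
  have p2: "phi2 q r K x \<le> - q / x^2 + 2 * r / (x^2 * L)"
  proof -
    have "r * (L + 1) / (y * L)^2 \<le> r * (L + 1) / (x^2 * L^2)"
      unfolding power_mult_distrib
      using r0 L1 y x by (intro divide_left_mono mult_right_mono mult_pos_pos power_mono) auto
    also have "\<dots> \<le> r * (2 * L) / (x^2 * L^2)"
      using r0 L1 x by (intro divide_right_mono mult_left_mono) auto
    also have "\<dots> = 2 * r / (x^2 * L)" using L1 by (simp add: power2_eq_square field_simps)
    finally show ?thesis by (simp add: phi2_def y_def L_def)
  qed
  have "phi2 q r K x + (phi1 q r K x)^2 \<le> - q / x^2 + 2 * r / (x^2 * L) + a^2"
    using p2 sq p1 by simp
  also have "\<dots> = (q^2 - q + 2 * r / L) / x^2"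
    using x L1 by (simp add: a_def power2_eq_square field_simps)
  also have "\<dots> \<le> 0"
  proof -
    have "2 * r / L \<le> (L * (q * (1 - q))) / L" by (rule divide_right_mono[OF rL]) (use L1 in auto)
    then have "2 * r / L \<le> q * (1 - q)" using L1 by simp
    then have "q^2 - q + 2 * r / L \<le> 0" by (simp add: power2_eq_square algebra_simps)
    then show ?thesis by (intro divide_nonpos_pos) (use x in simp_all)
  qed
  finally show ?thesis .
qed

lemma gg_tangent:
  assumes "0 < x" "0 < y"
  shows "gg q r K x \<le> gg q r K y + (gg q r K y * phi1 q r K y) * (x - y)"
proof (rule concave_tangent[where a=0 and g'="\<lambda>x. gg q r K x * phi1 q r K x"
      and g''="\<lambda>x. gg q r K x * (phi2 q r K x + (phi1 q r K x)^2)"])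
  fix x :: real assume "0 < x"
  then show "(gg q r K has_real_derivative gg q r K x * phi1 q r K x) (at x)" by (rule gg_deriv)
next
  fix x :: real assume "0 < x"
  then show "((\<lambda>x. gg q r K x * phi1 q r K x) has_real_derivative gg q r K x * (phi2 q r K x + (phi1 q r K x)^2)) (at x)"
    by (rule gg1_deriv)
next
  fix x :: real assume x: "0 < x"
  show "gg q r K x * (phi2 q r K x + (phi1 q r K x)^2) \<le> 0"
    using sign[OF x] by (simp add: gg_def mult_nonneg_nonpos)
qed (use assms in auto)

lemma gg_pos: "0 < gg q r K x" by (simp add: gg_def)

end

lemma binom_tangent:
  fixes g :: "real \<Rightarrow> real" and p d :: real and n :: nat
  assumes p: "0 \<le> p" "p \<le> 1"
    and tan: "\<And>m. m \<le> n \<Longrightarrow> g (real m + 1) \<le> g (1 + real n * p) + d * (real m + 1 - (1 + real n * p))"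
  shows "(\<Sum>m\<le>n. real (n choose m) * p^m * (1-p)^(n-m) * g (real m + 1)) \<le> g (1 + real n * p)"
proof -
  define M where "M = 1 + real n * p"
  define w where "w m = real (n choose m) * p^m * (1-p)^(n-m)" for m
  have wnn: "0 \<le> w m" for m using p by (simp add: w_def)
  have "(\<Sum>m\<le>n. w m * g (real m + 1)) \<le> (\<Sum>m\<le>n. w m * (g M + d * (real m + 1 - M)))"
    by (rule sum_mono, rule mult_left_mono) (use tan wnn in \<open>auto simp: M_def\<close>)
  also have "\<dots> = (\<Sum>m\<le>n. g M * w m + d * (w m * real m) + d * (1 - M) * w m)"
    by (rule sum.cong) (simp_all add: algebra_simps)
  also have "\<dots> = g M * (\<Sum>m\<le>n. w m) + d * (\<Sum>m\<le>n. w m * real m) + d * (1 - M) * (\<Sum>m\<le>n. w m)"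
    by (simp add: sum.distrib sum_distrib_left)
  also have "\<dots> = g M"
    using binom_sum1[of n p] binom_mean[of n p] by (simp add: w_def M_def algebra_simps)
  finally show ?thesis by (simp add: w_def M_def)
qed

context gpar
begin

lemma drift_Qbar:
  fixes p C :: real and j :: nat
  assumes p: "0 < p" "p \<le> 1" and j: "1 \<le> j" and C: "0 \<le> C"
  shows "(\<Sum>k\<in>{1..j+1}. Qbar p j k * (C * gg q r K (real k)))
     \<le> C * p * (gg q r K (p * real j + 1 - p) - gg q r K (real j) + (real j + 1) * (gg q r K (real j) * phi1 q r K (real j)))"
proof -
  define M where "M = p * real j + 1 - p"
  define g where "g = gg q r K"
  define g' where "g' x = gg q r K x * phi1 q r K x" for x
  have M1: "M = 1 + real (j - 1) * p" using j by (simp add: M_def of_nat_diff algebra_simps)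
  have Mpos: "0 < M" using p j by (simp add: M1 add_pos_nonneg)
  have E: "(\<Sum>m\<le>j-1. real ((j-1) choose m) * p ^ m * (1 - p) ^ (j - 1 - m) * g (real m + 1)) \<le> g M"
    unfolding M1
  proof (rule binom_tangent[where d="g' (1 + real (j - 1) * p)"])
    fix m assume "m \<le> j - 1"
    show "g (real m + 1) \<le> g (1 + real (j - 1) * p) + g' (1 + real (j - 1) * p) * (real m + 1 - (1 + real (j - 1) * p))"
      unfolding g_def g'_def by (rule gg_tangent) (use Mpos M1 in auto)
  qed (use p in auto)
  have U0: "g (real j + 1) \<le> g (real j) + g' (real j) * 1"
    using gg_tangent[of "real j + 1" "real j"] j unfolding g_def g'_def by simp
  have U: "g (real (j + 1)) \<le> g (real j) + g' (real j)"
    using U0 by (simp add: add.commute)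
  have "(\<Sum>k\<in>{1..j+1}. Qbar p j k * (C * g (real k)))
      = p * (\<Sum>m\<le>j-1. real ((j-1) choose m) * p ^ m * (1 - p) ^ (j - 1 - m) * (C * g (real (m + 1))))
        - (2 + real j) * p * (C * g (real j)) + real (j + 1) * p * (C * g (real (j + 1)))"
    by (rule GF[OF j])
  also have "(\<Sum>m\<le>j-1. real ((j-1) choose m) * p ^ m * (1 - p) ^ (j - 1 - m) * (C * g (real (m + 1))))
      = C * (\<Sum>m\<le>j-1. real ((j-1) choose m) * p ^ m * (1 - p) ^ (j - 1 - m) * g (real m + 1))"
    by (simp add: sum_distrib_left algebra_simps)
  also have "p * (C * (\<Sum>m\<le>j-1. real ((j-1) choose m) * p ^ m * (1 - p) ^ (j - 1 - m) * g (real m + 1)))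
      \<le> p * (C * g M)"
    using E p C by (intro mult_left_mono) auto
  also have "real (j + 1) * p * (C * g (real (j + 1))) \<le> real (j + 1) * p * (C * (g (real j) + g' (real j)))"
    using p C by (intro mult_left_mono[OF mult_left_mono[OF U]]) auto
  finally have "(\<Sum>k\<in>{1..j+1}. Qbar p j k * (C * g (real k)))
      \<le> p * (C * g M) - (2 + real j) * p * (C * g (real j)) + real (j + 1) * p * (C * (g (real j) + g' (real j)))"
    by simp
  also have "\<dots> = C * p * (g M - g (real j) + (real j + 1) * g' (real j))"
    by (simp add: algebra_simps)
  finally show ?thesis by (simp add: g_def g'_def M_def)
qed

end

lemma ev_from_limits:
  fixes D F h :: "real \<Rightarrow> real" and lam p :: real
  assumes lim1: "((\<lambda>x. D x / h x) \<longlongrightarrow> lam) at_top" and lam: "lam < 0"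
    and lim2: "((\<lambda>x. (F x + 1) / h x) \<longlongrightarrow> 1) at_top"
    and hpos: "eventually (\<lambda>x. 0 < h x) at_top" and p: "0 < p"
  shows "eventually (\<lambda>x. (4 / (p * (- lam))) * p * D x + F x + 1 \<le> 0) at_top"
proof -
  have e1: "eventually (\<lambda>x. D x / h x < lam / 2) at_top"
    by (rule order_tendstoD(2)[OF lim1]) (use lam in simp)
  have e2: "eventually (\<lambda>x. (F x + 1) / h x < 2) at_top"
    by (rule order_tendstoD(2)[OF lim2]) simp
  show ?thesis using e1 e2 hpos
  proof eventually_elim
    case (elim x)
    then have d: "D x < lam / 2 * h x" and f: "F x + 1 < 2 * h x"
      by (simp_all add: divide_less_eq)
    have "(4 / (p * (- lam))) * p * D x = (4 / (- lam)) * D x" using p by simp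
    also have "\<dots> \<le> (4 / (- lam)) * (lam / 2 * h x)"
      using d lam by (intro mult_left_mono) auto
    also have "\<dots> = - 2 * h x" using lam by (simp add: field_simps)
    finally show ?case using f by simp
  qed
qed

context gpar
begin

lemma eventual_drift:
  fixes p C :: real and F :: "real \<Rightarrow> real"
  assumes p: "0 < p" "p \<le> 1" and C: "0 \<le> C"
    and ev: "eventually (\<lambda>x. C * p * (gg q r K (p*x+1-p) - gg q r K x + (x+1) * (gg q r K x * phi1 q r K x)) + F x + 1 \<le> 0) at_top"
  shows "\<exists>N. \<forall>j\<ge>N. 1 \<le> j \<and> (\<Sum>k\<in>{1..j+1}. Qbar p j k * (C * gg q r K (real k))) + F (real j) + 1 \<le> 0"
proof -
  obtain X where X: "\<And>x. x \<ge> X \<Longrightarrow> C * p * (gg q r K (p*x+1-p) - gg q r K x + (x+1) * (gg q r K x * phi1 q r K x)) + F x + 1 \<le> 0"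
    using ev by (auto simp: eventually_at_top_linorder)
  define N where "N = max 1 (nat \<lceil>X\<rceil>)"
  have "1 \<le> j \<and> (\<Sum>k\<in>{1..j+1}. Qbar p j k * (C * gg q r K (real k))) + F (real j) + 1 \<le> 0" if j: "N \<le> j" for j
  proof
    show j1: "1 \<le> j" using j by (simp add: N_def)
    have "X \<le> real j" using j unfolding N_def by linarith
    from X[OF this] drift_Qbar[OF p j1 C]
    show "(\<Sum>k\<in>{1..j+1}. Qbar p j k * (C * gg q r K (real k))) + F (real j) + 1 \<le> 0"
      by (simp add: algebra_simps)
  qed
  then show ?thesis by blast
qed

end

lemma ln_less_minus_one: fixes x :: real assumes "0 < x" "x \<noteq> 1" shows "ln x < x - 1"
proof -
  have s: "0 < sqrt x" using assms by simp
  have "ln x = 2 * ln (sqrt x)" using assms by (simp add: ln_sqrt)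
  also have "\<dots> \<le> 2 * (sqrt x - 1)" using ln_le_minus_one[OF s] by simp
  also have "\<dots> < x - 1"
  proof -
    have "sqrt x \<noteq> 1" using assms by simp
    then have "0 < (sqrt x - 1)^2" by simp
    then show ?thesis using assms by (simp add: power2_eq_square algebra_simps)
  qed
  finally show ?thesis .
qed

lemma case2_sign:
  fixes p q :: real
  assumes p: "0 < p" and q: "0 < q" "q < 1" and pq: "p powr q = 1 - q"
  shows "(1 - q) * (- ln p) < 1"
proof -
  have "q * ln p = ln (1 - q)" using pq p by (metis ln_powr)
  define s where "s = 1 - q"
  have s: "0 < s" "s < 1" using q by (auto simp: s_def)
  have "ln (1 / s) < 1 / s - 1" by (rule ln_less_minus_one) (use s in auto)
  then have "- ln s < 1 / s - 1" using s by (simp add: ln_div)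
  then have "s * (- ln s) < s * (1 / s - 1)" using s by (intro mult_strict_left_mono) auto
  then have "- (s * ln s) < 1 - s" using s by (simp add: algebra_simps)
  then have "- ((1 - q) * ln (1 - q)) < q" by (simp add: s_def)
  then have "- ((1 - q) * (q * ln p)) < q" using \<open>q * ln p = ln (1 - q)\<close> by simp
  then have "q * ((1 - q) * (- ln p)) < q * 1" by (simp add: algebra_simps)
  then show ?thesis by (simp only: mult_less_cancel_left_pos[OF q(1)])
qed

lemma V_case1:
  fixes p q :: real
  assumes p: "0 < p" "p < 1" and q: "0 < q" "q < 1" and h: "-1 + q + p powr q < 0"
  shows "\<exists>C K N. gpar q 0 K \<and> 0 \<le> C \<and>
    (\<forall>j\<ge>N. 1 \<le> j \<and> (\<Sum>k\<in>{1..j+1}. Qbar p j k * (C * gg q 0 K (real k))) + real j powr q + 1 \<le> 0)"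
proof -
  define K :: real where "K = exp 1"
  have K: "1 < K" unfolding K_def by (rule one_less_exp_iff[THEN iffD2]) simp
  have G: "gpar q 0 K" by unfold_locales (use q K in \<open>auto simp: K_def\<close>)
  have ep: "exp (q * ln p) = p powr q" using p by (simp add: powr_def)
  define lam where "lam = exp (q * ln p) - 1 + q"
  have lam: "lam < 0" using h ep by (simp add: lam_def)
  define D where "D x = gg q 0 K (p*x+1-p) - gg q 0 K x + (x+1) * (gg q 0 K x * phi1 q 0 K x)" for x
  have lim1: "((\<lambda>x. D x / gg q 0 K x) \<longlongrightarrow> lam) at_top"
    unfolding D_def gg_def phi_def phi1_def lam_def
    using p q K by (real_asymp simp: p q K)
  have lim2: "((\<lambda>x. (x powr q + 1) / gg q 0 K x) \<longlongrightarrow> 1) at_top"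
    unfolding gg_def phi_def
    using p q K by (real_asymp simp: p q K)
  have hpos: "eventually (\<lambda>x. 0 < gg q 0 K x) at_top" by (simp add: gg_def)
  define C where "C = 4 / (p * (- lam))"
  have "0 < p * (- lam)" using p lam by (intro mult_pos_pos) auto
  then have C: "0 \<le> C" by (simp add: C_def)
  have ev: "eventually (\<lambda>x. C * p * D x + x powr q + 1 \<le> 0) at_top"
    unfolding C_def by (rule ev_from_limits[OF lim1 lam lim2 hpos p(1)])
  have "\<exists>N. \<forall>j\<ge>N. 1 \<le> j \<and> (\<Sum>k\<in>{1..j+1}. Qbar p j k * (C * gg q 0 K (real k))) + real j powr q + 1 \<le> 0"
    by (rule gpar.eventual_drift[OF G p(1) less_imp_le[OF p(2)] C, where F="\<lambda>x. x powr q"])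
       (use ev in \<open>simp add: D_def\<close>)
  then show ?thesis using G C by blast
qed

lemma V_case2:
  fixes p q r :: real
  assumes p: "0 < p" "p < 1" and q: "0 < q" "q < 1" and r: "0 < r" and pq: "p powr q = 1 - q"
  shows "\<exists>C K N. gpar q r K \<and> 0 \<le> C \<and>
    (\<forall>j\<ge>N. 1 \<le> j \<and> (\<Sum>k\<in>{1..j+1}. Qbar p j k * (C * gg q r K (real k)))
        + real j powr q * ln (real j + 1) powr (-(r+1)) + 1 \<le> 0)"
proof -
  define K :: real where "K = exp (1 + 2 * r / (q * (1 - q)))"
  have t: "0 \<le> 2 * r / (q * (1 - q))" using q r by simp
  have K: "1 < K" unfolding K_def by (rule one_less_exp_iff[THEN iffD2]) (use t in simp)
  have G: "gpar q r K" by unfold_locales (use q K r t in \<open>auto simp: K_def\<close>)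
  have ep: "exp (q * ln p) = 1 - q" using p pq by (simp add: powr_def)
  define lam where "lam = - r * (1 - q) * ln p - r"
  have lam: "lam < 0"
  proof -
    have "(1 - q) * (- ln p) < 1" by (rule case2_sign[OF p(1) q pq])
    then have "r * ((1 - q) * (- ln p)) < r * 1" using r by (intro mult_strict_left_mono) auto
    then show ?thesis by (simp add: lam_def algebra_simps)
  qed
  define D where "D x = gg q r K (p*x+1-p) - gg q r K x + (x+1) * (gg q r K x * phi1 q r K x)" for x
  have lim1: "((\<lambda>x. D x / (gg q r K x / ln (x + K))) \<longlongrightarrow> lam) at_top"
    unfolding D_def gg_def phi_def phi1_def lam_def
    using p q K r ep by (real_asymp simp: p q K r ep)
  have lim2: "((\<lambda>x. (x powr q * ln (x + 1) powr (-(r+1)) + 1) / (gg q r K x / ln (x + K))) \<longlongrightarrow> 1) at_top"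
    unfolding gg_def phi_def
    using p q K r by (real_asymp simp: p q K r)
  have hpos: "eventually (\<lambda>x. 0 < gg q r K x / ln (x + K)) at_top"
  proof -
    have "eventually (\<lambda>x::real. 0 < x) at_top" by (rule eventually_gt_at_top)
    then show ?thesis
    proof eventually_elim
      case (elim x)
      then have "1 \<le> ln (x + K)" using gpar.L_ge[OF G elim] by simp
      then show ?case by (simp add: gg_def)
    qed
  qed
  define C where "C = 4 / (p * (- lam))"
  have "0 < p * (- lam)" using p lam by (intro mult_pos_pos) auto
  then have C: "0 \<le> C" by (simp add: C_def)
  have ev: "eventually (\<lambda>x. C * p * D x + x powr q * ln (x + 1) powr (-(r+1)) + 1 \<le> 0) at_top"
    unfolding C_def by (rule ev_from_limits[OF lim1 lam lim2 hpos p(1)])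
  have "\<exists>N. \<forall>j\<ge>N. 1 \<le> j \<and> (\<Sum>k\<in>{1..j+1}. Qbar p j k * (C * gg q r K (real k)))
        + real j powr q * ln (real j + 1) powr (-(r+1)) + 1 \<le> 0"
    by (rule gpar.eventual_drift[OF G p(1) less_imp_le[OF p(2)] C, where F="\<lambda>x. x powr q * ln (x + 1) powr (-(r+1))"])
       (use ev in \<open>simp add: D_def\<close>)
  then show ?thesis using G C by blast
qed

lemma assemble:
  fixes p :: real and V f :: "nat \<Rightarrow> real" and N :: nat
  assumes p: "0 < p" "p < 1"
    and Vnn: "\<And>k. 1 \<le> k \<Longrightarrow> 0 \<le> V k"
    and fnn: "\<And>k. 1 \<le> k \<Longrightarrow> 0 \<le> f k"
    and dr: "\<forall>j\<ge>N. 1 \<le> j \<and> (\<Sum>k\<in>{1..j+1}. Qbar p j k * V k) + f j + 1 \<le> 0"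
  shows "positive_recurrent (Qbar p) {1..} \<and> (\<exists>\<pi>. stationary_distribution (Qbar p) {1..} \<pi>) \<and>
    (\<forall>\<pi>. stationary_distribution (Qbar p) {1..} \<pi> \<longrightarrow> (\<lambda>j. \<pi> j * f j) summable_on {1..})"
proof -
  interpret qchain "Qbar p" by (rule qchain_Qbar) (use p in auto)
  define c1 where "c1 = (\<lambda>k. 1 / qrate (Qbar p) k)"
  define cf where "cf = (\<lambda>k. f k / qrate (Qbar p) k)"
  have drift1: "c1 j + Pf j V \<le> V j" if "N \<le> j" "1 \<le> j" for j
  proof -
    have "c1 j * qrate (Qbar p) j = 1" using qpos[OF that(2)] by (simp add: c1_def)
    moreover have "(\<Sum>k\<in>{1..j+1}. Qbar p j k * V k) + f j + 1 \<le> 0" using dr that by auto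
    ultimately have "c1 j * qrate (Qbar p) j + (\<Sum>k\<in>{1..j+1}. Qbar p j k * V k) \<le> 0"
      using fnn[OF that(2)] by linarith
    then show ?thesis using drift_iff[OF that(2)] by blast
  qed
  have driftf: "cf j + Pf j V \<le> V j" if "N \<le> j" "1 \<le> j" for j
  proof -
    have "cf j * qrate (Qbar p) j = f j" using qpos[OF that(2)] by (simp add: cf_def)
    moreover have "(\<Sum>k\<in>{1..j+1}. Qbar p j k * V k) + f j + 1 \<le> 0" using dr that by auto
    ultimately have "cf j * qrate (Qbar p) j + (\<Sum>k\<in>{1..j+1}. Qbar p j k * V k) \<le> 0"
      by linarith
    then show ?thesis using drift_iff[OF that(2)] by blast
  qed
  have up: "\<And>j. 1 \<le> j \<Longrightarrow> 1/2 \<le> P j (Suc j)"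
    using P_up_Qbar p by auto
  have down: "\<And>j. i < j \<Longrightarrow> 0 < P j i" if "1 \<le> i" for i
    using P_down_Qbar p that by auto
  have \<Lambda>: "0 < 2 * p" using p by simp
  have qup: "\<And>k. 1 \<le> k \<Longrightarrow> qrate (Qbar p) k \<le> (2 * p) * real (k + 1)"
    using qup_Qbar p by auto
  have W: "\<exists>W. lyap c1 W i" if i: "1 \<le> i" for i
    by (rule patch[OF i Vnn drift1 up down[OF i]])
  have PR: "positive_recurrent (Qbar p) {1..}"
    unfolding positive_recurrent_def
  proof
    fix i :: nat assume "i \<in> {1..}"
    then have i: "1 \<le> i" by simp
    obtain W where "lyap c1 W i" using W[OF i] by blast
    then show "positive_recurrent_state (Qbar p) {1..} i"
      by (intro pos_rec_state[OF i _ \<Lambda> qup]) (simp add: c1_def)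
  qed
  obtain W1 where W1: "lyap c1 W1 1" using W[of 1] by auto
  have ST: "\<exists>\<pi>. stationary_distribution (Qbar p) {1..} \<pi>"
    by (rule stationary_exists[OF _ _ \<Lambda> qup, of 1 W1]) (use W1 in \<open>simp_all add: c1_def\<close>)
  obtain Wf where Wf: "lyap cf Wf 1"
    using patch[of 1 V N cf, OF _ Vnn driftf up down] by auto
  have MO: "(\<lambda>j. \<pi> j * f j) summable_on {1..}" if st: "stationary_distribution (Qbar p) {1..} \<pi>" for \<pi>
  proof (rule stationary_moment[OF _ _ \<Lambda> qup _ fnn _ st, where i=1 and W=W1 and Wf=Wf])
    show "lyap (\<lambda>k. 1 / qrate (Qbar p) k) W1 1" using W1 by (simp add: c1_def)
    show "lyap (\<lambda>k. f k / qrate (Qbar p) k) Wf 1" using Wf by (simp add: cf_def)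
    fix j :: nat assume "1 \<le> j" "j \<noteq> 1"
    then show "0 < P j 1" using down[of 1 j] by simp
  qed simp_all
  show ?thesis using PR ST MO by blast
qed

theorem proposition6:
  fixes p q r :: real
  assumes hp: "0 < p" "p \<le> 1" and hq: "q > 0"
  shows "(-1 + q + p powr q < 0 \<longrightarrow>
            positive_recurrent (Qbar p) {1..} \<and>
            (\<exists>\<pi>. stationary_distribution (Qbar p) {1..} \<pi>) \<and>
            (\<forall>\<pi>. stationary_distribution (Qbar p) {1..} \<pi> \<longrightarrow>
                 (\<lambda>j. \<pi> j * real j powr q) summable_on {1..}))
       \<and> (p powr q = 1 - q \<and> p < exp (-1) \<and> r > 0 \<longrightarrow>
            positive_recurrent (Qbar p) {1..} \<and>
            (\<exists>\<pi>. stationary_distribution (Qbar p) {1..} \<pi>) \<and>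
            (\<forall>\<pi>. stationary_distribution (Qbar p) {1..} \<pi> \<longrightarrow>
                 (\<lambda>j. \<pi> j * (real j powr q * ln (real j + 1) powr (-(r + 1)))) summable_on {1..}))"
proof (rule conjI; rule impI)
  assume h: "-1 + q + p powr q < 0"
  have pq0: "0 < p powr q" using hp by simp
  have q1: "q < 1" using h pq0 by linarith
  have p1: "p < 1"
  proof (rule ccontr)
    assume "\<not> p < 1"
    then have "p = 1" using hp by simp
    then show False using h hq by simp
  qed
  obtain C K N where G: "gpar q 0 K" and C: "0 \<le> C"
    and D: "\<forall>j\<ge>N. 1 \<le> j \<and> (\<Sum>k\<in>{1..j+1}. Qbar p j k * (C * gg q 0 K (real k))) + real j powr q + 1 \<le> 0"
    using V_case1[OF hp(1) p1 hq q1 h] by blast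
  show "positive_recurrent (Qbar p) {1..} \<and>
            (\<exists>\<pi>. stationary_distribution (Qbar p) {1..} \<pi>) \<and>
            (\<forall>\<pi>. stationary_distribution (Qbar p) {1..} \<pi> \<longrightarrow>
                 (\<lambda>j. \<pi> j * real j powr q) summable_on {1..})"
    by (rule assemble[OF hp(1) p1 _ _ D]) (use C gpar.gg_pos[OF G] in \<open>auto intro: mult_nonneg_nonneg less_imp_le\<close>)
next
  assume h: "p powr q = 1 - q \<and> p < exp (-1) \<and> r > 0"
  have pq0: "0 < p powr q" using hp by simp
  have q1: "q < 1" using h pq0 by linarith
  have "exp (-1::real) < 1" by simp
  then have p1: "p < 1" using h by linarith
  obtain C K N where G: "gpar q r K" and C: "0 \<le> C"
    and D: "\<forall>j\<ge>N. 1 \<le> j \<and> (\<Sum>k\<in>{1..j+1}. Qbar p j k * (C * gg q r K (real k)))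
        + real j powr q * ln (real j + 1) powr (-(r+1)) + 1 \<le> 0"
    using V_case2[OF hp(1) p1 hq q1 _ ] h by blast
  show "positive_recurrent (Qbar p) {1..} \<and>
            (\<exists>\<pi>. stationary_distribution (Qbar p) {1..} \<pi>) \<and>
            (\<forall>\<pi>. stationary_distribution (Qbar p) {1..} \<pi> \<longrightarrow>
                 (\<lambda>j. \<pi> j * (real j powr q * ln (real j + 1) powr (-(r + 1)))) summable_on {1..})"
    by (rule assemble[OF hp(1) p1 _ _ D]) (use C gpar.gg_pos[OF G] in \<open>auto intro: mult_nonneg_nonneg less_imp_le\<close>)
qed

end
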